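(* Let $\mu$ be a finite Borel measure on $(-\pi,\pi)$ and $\mu^\#$ its symmetrization. Then \[u_{\mu^\#}(0)=\max_{[-\pi,\pi]}u_{\mu^\#}\ge\max_{[-\pi,\pi]}u_\mu,\] with equality if and only if $\mu=\mu^\#$.
   Context: A "Borel measure on $(-\pi,\pi)$" means a positive, non-zero measure on the Borel sets of $(-\pi,\pi)$; $\lambda$ is Lebesgue measure. $G(x,y)=-\frac{xy}{2\pi}-\frac12|x-y|+\frac{\pi}{2}$ on $[-\pi,\pi]^2$, and $u_\mu(x)=\int_{-\pi}^{\pi}G(x,y)\,d\mu(y)$ (the unique absolutely continuous solution of $-u''=\mu$ in distributions on $(-\pi,\pi)$ with $u(\pm\pi)=0$). Every finite Borel measure decomposes uniquely as $\mu=\nu+\sigma+\delta$ with $d\nu=f\,d\lambda$, $0\le f\in L^1[-\pi,\pi]$, $\sigma\perp\lambda$ atomless, $\delta$ purely discontinuous (a countable sum of nonnegative point masses). Symmetric decreasing rearrangement: $f^*(t)=\inf\{s:\lambda(\{f>s\})\le t\}$ for $t\in(0,2\pi)$ (with $f^*(0)=\operatorname{ess\,sup} f$, $f^*(2\pi)=\operatorname{ess\,inf}f$) and $f^\#(t)=f^*(2|t|)$ on $[-\pi,\pi]$. Symmetrization: $d\mu^\#=f^\#\,d\lambda+M\,d\delta_0$ with $M=\sigma((-\pi,\pi))+\delta((-\pi,\pi))$. *)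

theory Defs
  imports "HOL-Analysis.Analysis"
begin

definition G :: "real \<Rightarrow> real \<Rightarrow> real" where
  "G x y = - (x * y) / (2 * pi) - \<bar>x - y\<bar> / 2 + pi / 2"

definition u :: "real measure \<Rightarrow> real \<Rightarrow> real" where
  "u \<mu> x = (LINT y|\<mu>. G x y)"

definition finite_borel_measure_on_interval :: "real measure \<Rightarrow> bool" where
  "finite_borel_measure_on_interval \<mu> \<longleftrightarrow>
     sets \<mu> = sets borel \<and> emeasure \<mu> UNIV < \<infinity> \<and> emeasure \<mu> UNIV \<noteq> 0 \<and>
     emeasure \<mu> (UNIV - {-pi<..<pi}) = 0"

text \<open>Lebesgue decomposition mu = f d lambda + s, with s singular w.r.t. lambda
  (s = sigma + delta, the singular continuous plus purely discontinuous parts).\<close>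
definition lebesgue_decomp :: "real measure \<Rightarrow> (real \<Rightarrow> real) \<Rightarrow> real measure \<Rightarrow> bool" where
  "lebesgue_decomp \<mu> f s \<longleftrightarrow>
     f \<in> borel_measurable borel \<and> (\<forall>x. 0 \<le> f x) \<and>
     sets s = sets borel \<and>
     (\<exists>N\<in>sets borel. emeasure lborel N = 0 \<and> emeasure s (UNIV - N) = 0) \<and>
     (\<forall>A\<in>sets borel. emeasure \<mu> A = (\<integral>\<^sup>+x\<in>A. ennreal (f x) \<partial>lborel) + emeasure s A)"

definition decr_rearr :: "(real \<Rightarrow> real) \<Rightarrow> real \<Rightarrow> real" where
  "decr_rearr f t = Inf {s. measure lborel {x \<in> {-pi<..<pi}. f x > s} \<le> t}"

definition sym_rearr :: "(real \<Rightarrow> real) \<Rightarrow> real \<Rightarrow> real" where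
  "sym_rearr f t = (if t \<in> {-pi<..<pi} then decr_rearr f (2 * \<bar>t\<bar>) else 0)"

text \<open>Symmetrization: d mu# = f# d lambda + M d delta_0, M = singular mass of mu.\<close>
definition symmetrization :: "real measure \<Rightarrow> real measure" where
  "symmetrization \<mu> =
     (let (f, s) = (SOME (f, s). lebesgue_decomp \<mu> f s)
      in measure_of UNIV (sets borel)
           (\<lambda>A. (\<integral>\<^sup>+x\<in>A. ennreal (sym_rearr f x) \<partial>lborel)
                + emeasure s {-pi<..<pi} * indicator A 0))"

end

theory Submission
  imports Defs
begin

lemma decomp_nn_integral:
  fixes \<nu> s :: "real measure" and F :: "real \<Rightarrow> ennreal"
  assumes sn: "sets \<nu> = sets borel" and ss: "sets s = sets borel"
    and F: "F \<in> borel_measurable borel"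
    and eq: "\<And>A. A \<in> sets borel \<Longrightarrow> emeasure \<nu> A = (\<integral>\<^sup>+x. F x * indicator A x \<partial>lborel) + emeasure s A"
    and g: "g \<in> borel_measurable borel"
  shows "(\<integral>\<^sup>+x. g x \<partial>\<nu>) = (\<integral>\<^sup>+x. F x * g x \<partial>lborel) + (\<integral>\<^sup>+x. g x \<partial>s)"
  using g
proof (induction rule: borel_measurable_induct)
  case (cong f g)
  then show ?case by (metis UNIV_I space_borel ext)
next
  case (set A)
  have "A \<in> sets \<nu>" "A \<in> sets s" using set sn ss by auto
  then show ?case using eq[OF set] by simp
next
  case (mult u c)
  have m1: "u \<in> borel_measurable \<nu>" "u \<in> borel_measurable s" using mult
    by (auto simp: measurable_cong_sets[OF sn refl] measurable_cong_sets[OF ss refl])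
  have "(\<integral>\<^sup>+x. c * u x \<partial>\<nu>) = c * (\<integral>\<^sup>+x. u x \<partial>\<nu>)" by (rule nn_integral_cmult[OF m1(1)])
  moreover have "(\<integral>\<^sup>+x. c * u x \<partial>s) = c * (\<integral>\<^sup>+x. u x \<partial>s)" by (rule nn_integral_cmult[OF m1(2)])
  moreover have "(\<integral>\<^sup>+x. F x * (c * u x) \<partial>lborel) = c * (\<integral>\<^sup>+x. F x * u x \<partial>lborel)"
    by (subst nn_integral_cmult[symmetric]) (use mult F in \<open>auto simp: mult_ac\<close>)
  ultimately show ?case using mult by (simp add: distrib_left)
next
  case (add u v)
  have m1: "u \<in> borel_measurable \<nu>" "u \<in> borel_measurable s" "v \<in> borel_measurable \<nu>" "v \<in> borel_measurable s"
    using add by (auto simp: measurable_cong_sets[OF sn refl] measurable_cong_sets[OF ss refl])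
  have "(\<integral>\<^sup>+x. v x + u x \<partial>\<nu>) = (\<integral>\<^sup>+x. v x \<partial>\<nu>) + (\<integral>\<^sup>+x. u x \<partial>\<nu>)"
    by (rule nn_integral_add) (use m1 in auto)
  moreover have "(\<integral>\<^sup>+x. v x + u x \<partial>s) = (\<integral>\<^sup>+x. v x \<partial>s) + (\<integral>\<^sup>+x. u x \<partial>s)"
    by (rule nn_integral_add) (use m1 in auto)
  moreover have "(\<integral>\<^sup>+x. F x * (v x + u x) \<partial>lborel) = (\<integral>\<^sup>+x. F x * v x \<partial>lborel) + (\<integral>\<^sup>+x. F x * u x \<partial>lborel)"
    by (simp add: distrib_left, rule nn_integral_add) (use add F in auto)
  ultimately show ?case using add by (simp add: algebra_simps)
next
  case (seq U)
  have m1: "\<And>i. U i \<in> borel_measurable \<nu>" "\<And>i. U i \<in> borel_measurable s"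
    using seq by (auto simp: measurable_cong_sets[OF sn refl] measurable_cong_sets[OF ss refl])
  have inc: "incseq U" by fact
  have "(\<integral>\<^sup>+x. (SUP i. U i) x \<partial>\<nu>) = (SUP i. \<integral>\<^sup>+x. U i x \<partial>\<nu>)"
    unfolding SUP_apply by (rule nn_integral_monotone_convergence_SUP[OF inc m1(1)])
  moreover have "(\<integral>\<^sup>+x. (SUP i. U i) x \<partial>s) = (SUP i. \<integral>\<^sup>+x. U i x \<partial>s)"
    unfolding SUP_apply by (rule nn_integral_monotone_convergence_SUP[OF inc m1(2)])
  moreover have "(\<integral>\<^sup>+x. F x * (SUP i. U i) x \<partial>lborel) = (SUP i. \<integral>\<^sup>+x. F x * U i x \<partial>lborel)"
  proof -
    have "(\<integral>\<^sup>+x. F x * (SUP i. U i) x \<partial>lborel) = (\<integral>\<^sup>+x. (SUP i. F x * U i x) \<partial>lborel)"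
      unfolding SUP_apply by (simp add: SUP_mult_left_ennreal)
    also have "\<dots> = (SUP i. \<integral>\<^sup>+x. F x * U i x \<partial>lborel)"
      by (rule nn_integral_monotone_convergence_SUP)
        (use inc seq F in \<open>auto simp: incseq_def le_fun_def intro: mult_left_mono\<close>)
    finally show ?thesis .
  qed
  moreover have "(SUP i. (\<integral>\<^sup>+x. F x * U i x \<partial>lborel) + (\<integral>\<^sup>+x. U i x \<partial>s)) =
      (SUP i. (\<integral>\<^sup>+x. F x * U i x \<partial>lborel)) + (SUP i. (\<integral>\<^sup>+x. U i x \<partial>s))"
    by (rule ennreal_SUP_add)
      (use inc F seq m1 in \<open>auto simp: incseq_def le_fun_def intro!: nn_integral_mono mult_left_mono\<close>)
  ultimately show ?case using seq by simp
qed

lemma layer_cake: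
  fixes F :: "real \<Rightarrow> real" and w :: "real \<Rightarrow> ennreal"
  assumes [measurable]: "F \<in> borel_measurable borel" "w \<in> borel_measurable borel"
  shows "(\<integral>\<^sup>+y. ennreal (F y) * w y \<partial>lborel) =
    (\<integral>\<^sup>+t. indicator {0..} t * (\<integral>\<^sup>+y. indicator {y. t < F y} y * w y \<partial>lborel) \<partial>lborel)"
proof -
  have e: "ennreal (F y) = (\<integral>\<^sup>+t. indicator {0..<F y} t \<partial>lborel)" for y
    by (cases "0 \<le> F y") (auto simp: ennreal_neg)
  have "(\<integral>\<^sup>+y. ennreal (F y) * w y \<partial>lborel) = (\<integral>\<^sup>+y. (\<integral>\<^sup>+t. indicator {0..<F y} t * w y \<partial>lborel) \<partial>lborel)"
    by (subst e, subst nn_integral_multc) auto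
  also have "\<dots> = (\<integral>\<^sup>+t. (\<integral>\<^sup>+y. indicator {0..<F y} t * w y \<partial>lborel) \<partial>lborel)"
  proof (rule lborel_pair.Fubini'[symmetric])
    have "(\<lambda>(y, t). indicator {0..<F y} t * w y) = (\<lambda>p. indicator {p. 0 \<le> snd p \<and> snd p < F (fst p)} p * w (fst p))"
      by (auto simp: fun_eq_iff indicator_def)
    then show "case_prod (\<lambda>y t. indicator {0..<F y} t * w y) \<in> borel_measurable (lborel \<Otimes>\<^sub>M lborel)"
      by simp measurable
  qed
  also have "\<dots> = (\<integral>\<^sup>+t. indicator {0..} t * (\<integral>\<^sup>+y. indicator {y. t < F y} y * w y \<partial>lborel) \<partial>lborel)"
  proof (rule nn_integral_cong)
    fix t :: real
    have "(\<lambda>y. indicator {0..<F y} t * w y) = (\<lambda>y. indicator {0..} t * (indicator {y. t < F y} y * w y))"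
      by (auto simp: fun_eq_iff indicator_def)
    then show "(\<integral>\<^sup>+y. indicator {0..<F y} t * w y \<partial>lborel) = indicator {0..} t * (\<integral>\<^sup>+y. indicator {y. t < F y} y * w y \<partial>lborel)"
      by (simp add: nn_integral_cmult)
  qed
  finally show ?thesis .
qed

abbreviation "I \<equiv> {-pi<..<pi::real}"

definition mf :: "(real \<Rightarrow> real) \<Rightarrow> real \<Rightarrow> real" where
  "mf f s = measure lborel {x \<in> I. f x > s}"

lemma emeasure_sub_I:
  assumes "A \<subseteq> I"
  shows "emeasure lborel A = ennreal (measure lborel A)" "measure lborel A \<le> 2*pi"
proof -
  have le: "emeasure lborel A \<le> ennreal (2*pi)"
    using emeasure_mono[of A I lborel] assms by simp
  then show e: "emeasure lborel A = ennreal (measure lborel A)"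
    by (intro emeasure_eq_ennreal_measure) (auto simp: top_unique)
  show "measure lborel A \<le> 2*pi" using le unfolding e by (simp add: ennreal_le_iff)
qed

lemma em_mf: "emeasure lborel {x \<in> I. f x > s} = ennreal (mf f s)"
  unfolding mf_def by (rule emeasure_sub_I) auto

lemma mf_le: "mf f s \<le> 2*pi" and mf_nonneg: "0 \<le> mf f s"
  unfolding mf_def by (rule emeasure_sub_I) auto

lemma mf_mono:
  assumes [measurable]: "f \<in> borel_measurable borel" and "s1 \<le> s2"
  shows "mf f s2 \<le> mf f s1"
proof -
  have "emeasure lborel {x \<in> I. f x > s2} \<le> emeasure lborel {x \<in> I. f x > s1}"
    by (rule emeasure_mono) (use assms in auto)
  then show ?thesis unfolding em_mf by (simp add: ennreal_le_iff mf_nonneg)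
qed

lemma mf_neg:
  assumes "\<And>x. 0 \<le> f x" "s < 0"
  shows "mf f s = 2*pi"
proof -
  have "\<forall>x. s < f x" using assms by (meson less_le_trans)
  then have "{x \<in> I. f x > s} = I" by auto
  then show ?thesis unfolding mf_def by simp
qed

lemma mf_small:
  assumes [measurable]: "f \<in> borel_measurable borel" and t: "0 < t"
  shows "\<exists>n::nat. mf f (real n) < t"
proof -
  let ?A = "\<lambda>n::nat. {x \<in> I. f x > real n}"
  have "(\<lambda>n. emeasure lborel (?A n)) \<longlonglongrightarrow> emeasure lborel (\<Inter>n. ?A n)"
  proof (rule Lim_emeasure_decseq)
    show "emeasure lborel (?A n) \<noteq> \<infinity>" for n by (simp only: em_mf) simp
  qed (auto simp: decseq_def)
  moreover have "(\<Inter>n. ?A n) = {}"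
  proof safe
    fix x assume "x \<in> (\<Inter>n. ?A n)"
    moreover obtain n :: nat where "f x < real n" using reals_Archimedean2 by blast
    ultimately show "x \<in> {}" by (metis (mono_tags, lifting) INT_E UNIV_I mem_Collect_eq not_less_iff_gr_or_eq)
  qed
  ultimately have "(\<lambda>n. emeasure lborel (?A n)) \<longlonglongrightarrow> 0" by simp
  then have "eventually (\<lambda>n. emeasure lborel (?A n) < ennreal t) sequentially"
    by (rule order_tendstoD) (use t in simp)
  then obtain n where "emeasure lborel (?A n) < ennreal t" by (auto dest: eventually_happens)
  then have "mf f (real n) < t" unfolding em_mf using ennreal_less_iff[OF mf_nonneg] by blast
  then show ?thesis by blast
qed

lemma mf_right:
  assumes [measurable]: "f \<in> borel_measurable borel" and t: "t < mf f s" and t0: "0 \<le> t"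
  shows "\<exists>s'>s. t < mf f s'"
proof -
  let ?A = "\<lambda>n::nat. {x \<in> I. f x > s + 1 / Suc n}"
  have "(\<lambda>n. emeasure lborel (?A n)) \<longlonglongrightarrow> emeasure lborel (\<Union>n. ?A n)"
  proof (rule Lim_emeasure_incseq)
    show "incseq ?A"
    proof (rule incseq_SucI, safe)
      fix n x assume "x \<in> I" "s + 1 / real (Suc n) < f x" 
      moreover have "1 / real (Suc (Suc n)) \<le> 1 / real (Suc n)" by (simp add: frac_le)
      ultimately show "s + 1 / real (Suc (Suc n)) < f x" by linarith
    qed
  qed auto
  moreover have "(\<Union>n. ?A n) = {x \<in> I. f x > s}"
  proof safe
    fix x assume "x \<in> I" "s < f x"
    then obtain n where "inverse (real (Suc n)) < f x - s" using reals_Archimedean[of "f x - s"] by auto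
    then show "x \<in> (\<Union>n. ?A n)" using \<open>x \<in> I\<close> by (auto simp: field_simps intro!: exI[of _ n])
  next
    fix x n assume "s + 1 / real (Suc n) < f x"
    moreover have "0 < 1 / real (Suc n)" by simp
    ultimately show "s < f x" by linarith
  qed
  ultimately have "(\<lambda>n. emeasure lborel (?A n)) \<longlonglongrightarrow> ennreal (mf f s)" by (simp only: em_mf)
  then have "eventually (\<lambda>n. ennreal t < emeasure lborel (?A n)) sequentially"
    by (rule order_tendstoD) (use t t0 in \<open>simp add: ennreal_less_iff\<close>)
  then obtain n where "ennreal t < emeasure lborel (?A n)" by (auto dest: eventually_happens)
  then have "t < mf f (s + 1 / Suc n)" unfolding em_mf
    using t0 by (simp add: ennreal_less_iff)
  then show ?thesis by (intro exI[of _ "s + 1 / Suc n"]) auto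
qed

lemma decr_char:
  assumes f[measurable]: "f \<in> borel_measurable borel" and nn: "\<And>x. 0 \<le> f x"
    and t: "0 < t" "t < 2*pi"
  shows "s < decr_rearr f t \<longleftrightarrow> t < mf f s"
proof -
  define S where "S = {s. mf f s \<le> t}"
  have dr: "decr_rearr f t = Inf S" unfolding S_def decr_rearr_def mf_def by (rule refl)
  have S0: "\<And>r. r \<in> S \<Longrightarrow> 0 \<le> r"
  proof (rule ccontr)
    fix r assume "r \<in> S" "\<not> 0 \<le> r"
    then have "mf f r = 2*pi" by (intro mf_neg[OF nn]) auto
    with \<open>r \<in> S\<close> t show False unfolding S_def by auto
  qed
  then have bdd: "bdd_below S" by (auto simp: bdd_below_def)
  obtain n :: nat where "mf f (real n) < t" using mf_small[OF f t(1)] by blast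
  then have ne: "S \<noteq> {}" unfolding S_def by (auto intro!: exI[of _ "real n"])
  show ?thesis
  proof
    assume "s < decr_rearr f t"
    show "t < mf f s"
    proof (rule ccontr)
      assume "\<not> t < mf f s"
      then have "s \<in> S" unfolding S_def by auto
      then have "Inf S \<le> s" by (rule cInf_lower[OF _ bdd])
      then show False using \<open>s < decr_rearr f t\<close> dr by simp
    qed
  next
    assume "t < mf f s"
    then obtain s' where s': "s' > s" "t < mf f s'" using mf_right[OF f _ less_imp_le[OF t(1)]] by blast
    have "s' \<le> Inf S"
    proof (rule cInf_greatest[OF ne])
      fix r assume "r \<in> S"
      then have "mf f r \<le> t" unfolding S_def by auto
      show "s' \<le> r"
      proof (rule ccontr)
        assume "\<not> s' \<le> r"
        then have "mf f s' \<le> mf f r" by (intro mf_mono) auto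
        then show False using \<open>mf f r \<le> t\<close> s' by simp
      qed
    qed
    then show "s < decr_rearr f t" using dr s' by simp
  qed
qed

lemma Ioo_em: "emeasure lborel {a<..<b::real} = ennreal (b - a)"
  by (cases "a \<le> b") (auto simp: ennreal_neg)

definition hh :: "real \<Rightarrow> real" where "hh x = (pi^2 - x^2) / (2*pi)"

lemma G_min: "G x y = min ((pi-x)*(y+pi)) ((pi+x)*(pi-y)) / (2*pi)"
proof -
  have d: "(pi+x)*(pi-y) - (pi-x)*(y+pi) = 2*pi*(x-y)" by (simp add: algebra_simps)
  have p: "pi \<noteq> 0" by simp
  show ?thesis
  proof (cases "y \<le> x")
    case True
    then have "0 \<le> 2*pi*(x-y)" by simp
    then have "min ((pi-x)*(y+pi)) ((pi+x)*(pi-y)) = (pi-x)*(y+pi)"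
      using d by (intro min_absorb1) linarith
    moreover have "\<bar>x - y\<bar> = x - y" using True by simp
    ultimately show ?thesis unfolding G_def using p by (simp add: field_simps)
  next
    case False
    then have "2*pi*(x-y) \<le> 0" by (simp add: mult_nonneg_nonpos)
    then have "min ((pi-x)*(y+pi)) ((pi+x)*(pi-y)) = (pi+x)*(pi-y)"
      using d by (intro min_absorb2) linarith
    moreover have "\<bar>x - y\<bar> = y - x" using False by simp
    ultimately show ?thesis unfolding G_def using p by (simp add: field_simps)
  qed
qed

lemma G_measurable[measurable]: "G x \<in> borel_measurable borel"
  unfolding G_def by measurable

lemma G_level:
  assumes "-pi < x" "x < pi"
  shows "{y. t < G x y} = {2*pi*t/(pi-x) - pi <..< pi - 2*pi*t/(pi+x)}"
proof -
  have a: "0 < pi - x" "0 < pi + x" using assms by auto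
  have 1: "t < G x y \<longleftrightarrow> 2*pi*t < (pi-x)*(y+pi) \<and> 2*pi*t < (pi+x)*(pi-y)" for y
  proof -
    have "t < G x y \<longleftrightarrow> t * (2*pi) < min ((pi-x)*(y+pi)) ((pi+x)*(pi-y))"
      unfolding G_min by (rule pos_less_divide_eq) simp
    then show ?thesis by (simp add: mult.commute)
  qed
  have 2: "2*pi*t < (pi-x)*(y+pi) \<longleftrightarrow> 2*pi*t/(pi-x) - pi < y" for y
  proof -
    have "2*pi*t/(pi-x) < y+pi \<longleftrightarrow> 2*pi*t < (y+pi)*(pi-x)" by (rule pos_divide_less_eq[OF a(1)])
    moreover have "2*pi*t/(pi-x) - pi < y \<longleftrightarrow> 2*pi*t/(pi-x) < y+pi" by linarith
    ultimately show ?thesis by (simp add: mult.commute)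
  qed
  have 3: "2*pi*t < (pi+x)*(pi-y) \<longleftrightarrow> y < pi - 2*pi*t/(pi+x)" for y
  proof -
    have "2*pi*t/(pi+x) < pi-y \<longleftrightarrow> 2*pi*t < (pi-y)*(pi+x)" by (rule pos_divide_less_eq[OF a(2)])
    moreover have "y < pi - 2*pi*t/(pi+x) \<longleftrightarrow> 2*pi*t/(pi+x) < pi-y" by linarith
    ultimately show ?thesis by (simp add: mult.commute)
  qed
  show ?thesis using 1 2 3 by auto
qed

lemma G_level_em:
  assumes "-pi < x" "x < pi"
  shows "emeasure lborel {y. t < G x y} = ennreal (2*pi*(1 - t / hh x))"
proof -
  have a: "0 < pi - x" "0 < pi + x" using assms by auto
  have hx: "hh x = (pi-x)*(pi+x)/(2*pi)" unfolding hh_def by (simp add: power2_eq_square algebra_simps)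
  have "pi - 2*pi*t/(pi+x) - (2*pi*t/(pi-x) - pi) = 2*pi - 2*pi*t*(1/(pi+x) + 1/(pi-x))"
    by (simp add: algebra_simps)
  also have "1/(pi+x) + 1/(pi-x) = 2*pi/((pi-x)*(pi+x))"
    using a by (simp add: field_simps)
  also have "2*pi - 2*pi*t*(2*pi/((pi-x)*(pi+x))) = 2*pi*(1 - t / hh x)"
    unfolding hx using a by (simp add: field_simps)
  finally show ?thesis unfolding G_level[OF assms] Ioo_em by simp
qed

definition K :: "real \<Rightarrow> ennreal" where
  "K m = (\<integral>\<^sup>+v. indicator {0..} v * min (ennreal m) (ennreal (2*pi*(1 - v))) \<partial>lborel)"

lemma K_scale:
  assumes h: "0 < h"
  shows "(\<integral>\<^sup>+t. indicator {0..} t * min (ennreal m) (ennreal (2*pi*(1 - t/h))) \<partial>lborel) = ennreal h * K m"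
proof -
  have "(\<integral>\<^sup>+t. indicator {0..} t * min (ennreal m) (ennreal (2*pi*(1 - t/h))) \<partial>lborel) =
      ennreal (\<bar>h\<bar>) * (\<integral>\<^sup>+v. indicator {0..} (0 + h * v) * min (ennreal m) (ennreal (2*pi*(1 - (0 + h * v)/h))) \<partial>lborel)"
    apply (rule nn_integral_real_affine)
     apply measurable
    using h apply simp
    done
  also have "(\<lambda>v. (indicator {0..} (0 + h * v) :: ennreal) * min (ennreal m) (ennreal (2*pi*(1 - (0 + h * v)/h))))
      = (\<lambda>v. indicator {0..} v * min (ennreal m) (ennreal (2*pi*(1 - v))))"
  proof (rule ext)
    fix v :: real
    have 1: "0 \<le> h * v \<longleftrightarrow> 0 \<le> v" using h by (simp add: zero_le_mult_iff)
    have 2: "(0 + h * v)/h = v" using h by simp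
    show "(indicator {0..} (0 + h * v) :: ennreal) * min (ennreal m) (ennreal (2*pi*(1 - (0 + h * v)/h))) =
      indicator {0..} v * min (ennreal m) (ennreal (2*pi*(1 - v)))"
      unfolding 2 using 1 by (simp add: indicator_def)
  qed
  finally show ?thesis using h unfolding K_def by simp
qed

lemma bound_E:
  assumes x: "-pi < x" "x < pi" and E[measurable]: "E \<in> sets borel" and Em: "emeasure lborel E = ennreal m"
  shows "(\<integral>\<^sup>+y. ennreal (G x y) * indicator E y \<partial>lborel) \<le> ennreal (hh x) * K m"
proof -
  have "\<bar>x\<bar> < pi" using x by auto
  then have "\<bar>x\<bar>^2 < pi^2" by (intro power_strict_mono) auto
  then have h: "0 < hh x" unfolding hh_def using pi_gt_zero by simp
  have "(\<integral>\<^sup>+y. ennreal (G x y) * indicator E y \<partial>lborel) =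
    (\<integral>\<^sup>+t. indicator {0..} t * (\<integral>\<^sup>+y. indicator {y. t < G x y} y * indicator E y \<partial>lborel) \<partial>lborel)"
    by (rule layer_cake) auto
  also have "\<dots> \<le> (\<integral>\<^sup>+t. indicator {0..} t * min (ennreal m) (ennreal (2*pi*(1 - t / hh x))) \<partial>lborel)"
  proof (rule nn_integral_mono)
    fix t
    have "(\<integral>\<^sup>+y. indicator {y. t < G x y} y * indicator E y \<partial>lborel) = emeasure lborel ({y. t < G x y} \<inter> E)"
      unfolding indicator_inter_arith[symmetric] by (rule nn_integral_indicator) simp
    also have "\<dots> \<le> min (ennreal m) (ennreal (2*pi*(1 - t / hh x)))"
    proof (rule min.boundedI)
      show "emeasure lborel ({y. t < G x y} \<inter> E) \<le> ennreal m"
        unfolding Em[symmetric] by (rule emeasure_mono) auto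
      show "emeasure lborel ({y. t < G x y} \<inter> E) \<le> ennreal (2*pi*(1 - t / hh x))"
        unfolding G_level_em[OF x, symmetric] by (rule emeasure_mono) auto
    qed
    finally show "indicator {0..} t * (\<integral>\<^sup>+y. indicator {y. t < G x y} y * indicator E y \<partial>lborel)
        \<le> indicator {0..} t * min (ennreal m) (ennreal (2*pi*(1 - t / hh x)))"
      by (rule mult_left_mono) simp
  qed
  also have "\<dots> = ennreal (hh x) * K m" by (rule K_scale[OF h])
  finally show ?thesis .
qed

lemma hh0: "hh 0 = pi/2" unfolding hh_def by (simp add: power2_eq_square)

lemma ennreal_min: "ennreal (min a b) = min (ennreal a) (ennreal b)"
proof (cases "a \<le> b")
  case True
  then show ?thesis by (simp add: ennreal_leI min_absorb1)
next
  case False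
  then show ?thesis by (simp add: ennreal_leI min_absorb2)
qed

lemma exact_B:
  assumes m: "0 \<le> m"
  shows "(\<integral>\<^sup>+y. ennreal (G 0 y) * indicator {y. 2*\<bar>y\<bar> < m} y \<partial>lborel) = ennreal (pi/2) * K m"
proof -
  have B: "{y. 2*\<bar>y\<bar> < m} = {-m/2<..<m/2}" by (auto simp: abs_less_iff)
  have Bm[measurable]: "{y. 2*\<bar>y\<bar> < m} \<in> sets borel" unfolding B by simp
  have "(\<integral>\<^sup>+y. ennreal (G 0 y) * indicator {y. 2*\<bar>y\<bar> < m} y \<partial>lborel) =
    (\<integral>\<^sup>+t. indicator {0..} t * (\<integral>\<^sup>+y. indicator {y. t < G 0 y} y * indicator {y. 2*\<bar>y\<bar> < m} y \<partial>lborel) \<partial>lborel)"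
    by (rule layer_cake) (auto simp: B)
  also have "\<dots> = (\<integral>\<^sup>+t. indicator {0..} t * min (ennreal m) (ennreal (2*pi*(1 - t / hh 0))) \<partial>lborel)"
  proof (rule nn_integral_cong)
    fix t :: real
    have "(\<integral>\<^sup>+y. indicator {y. t < G 0 y} y * indicator {y. 2*\<bar>y\<bar> < m} y \<partial>lborel) = emeasure lborel ({y. t < G 0 y} \<inter> {y. 2*\<bar>y\<bar> < m})"
      unfolding indicator_inter_arith[symmetric] by (rule nn_integral_indicator) simp
    also have "{y. t < G 0 y} \<inter> {y. 2*\<bar>y\<bar> < m} = {- min (pi - 2*t) (m/2) <..< min (pi - 2*t) (m/2)}"
    proof -
      have "{y. t < G 0 y} = {y. \<bar>y\<bar> < pi - 2*t}" unfolding G_def by auto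
      moreover have "y \<in> {y. \<bar>y\<bar> < pi - 2*t} \<inter> {y. 2*\<bar>y\<bar> < m} \<longleftrightarrow> y \<in> {- min (pi - 2*t) (m/2) <..< min (pi - 2*t) (m/2)}" for y
      proof -
        have "y \<in> {y. \<bar>y\<bar> < pi - 2*t} \<inter> {y. 2*\<bar>y\<bar> < m} \<longleftrightarrow> \<bar>y\<bar> < pi - 2*t \<and> \<bar>y\<bar> < m/2" by auto
        also have "\<dots> \<longleftrightarrow> \<bar>y\<bar> < min (pi - 2*t) (m/2)" by simp
        also have "\<dots> \<longleftrightarrow> y \<in> {- min (pi - 2*t) (m/2) <..< min (pi - 2*t) (m/2)}" by (simp only: abs_less_iff greaterThanLessThan_iff) auto
        finally show ?thesis .
      qed
      ultimately show ?thesis by blast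
    qed
    also have "emeasure lborel \<dots> = min (ennreal m) (ennreal (2*pi*(1 - t / hh 0)))"
    proof -
      have e: "2*pi*(1 - t/hh 0) = 2*(pi - 2*t)" unfolding hh0 using pi_gt_zero by (simp add: field_simps)
      have "min (pi - 2*t) (m/2) - - min (pi - 2*t) (m/2) = min m (2*(pi - 2*t))" by (simp add: min_def)
      then show ?thesis unfolding Ioo_em e ennreal_min[symmetric] by simp
    qed
    finally show "indicator {0..} t * (\<integral>\<^sup>+y. indicator {y. t < G 0 y} y * indicator {y. 2*\<bar>y\<bar> < m} y \<partial>lborel)
      = indicator {0..} t * min (ennreal m) (ennreal (2*pi*(1 - t / hh 0)))"
      by simp
  qed
  also have "\<dots> = ennreal (pi/2) * K m" unfolding hh0 by (rule K_scale) simp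
  finally show ?thesis .
qed

definition fs :: "(real \<Rightarrow> real) \<Rightarrow> real \<Rightarrow> real" where
  "fs f y = (if y \<in> I \<and> y \<noteq> 0 then decr_rearr f (2*\<bar>y\<bar>) else 0)"

lemma sym_rearr_fs: "y \<noteq> 0 \<Longrightarrow> sym_rearr f y = fs f y"
  unfolding sym_rearr_def fs_def by auto

context
  fixes f :: "real \<Rightarrow> real"
  assumes f[measurable]: "f \<in> borel_measurable borel" and nn: "\<And>x. 0 \<le> f x"
begin

lemma fs_char:
  assumes "y \<in> I" "y \<noteq> 0"
  shows "s < fs f y \<longleftrightarrow> 2*\<bar>y\<bar> < mf f s"
proof -
  have "0 < 2*\<bar>y\<bar>" "2*\<bar>y\<bar> < 2*pi" using assms by auto
  then show ?thesis using decr_char[OF f nn] assms unfolding fs_def by simp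
qed

lemma fs_nonneg: "0 \<le> fs f y"
proof (cases "y \<in> I \<and> y \<noteq> 0")
  case True
  show ?thesis
  proof (rule ccontr)
    assume a: "\<not> 0 \<le> fs f y"
    then have "mf f (fs f y) = 2*pi" by (intro mf_neg[OF nn]) simp
    moreover have "2*\<bar>y\<bar> < 2*pi" using True by auto
    ultimately have "fs f y < fs f y" using fs_char[of y "fs f y"] True by simp
    then show False by simp
  qed
qed (auto simp: fs_def)

lemma fs_level: "{y. s < fs f y} = {y. y \<in> I \<and> y \<noteq> 0 \<and> 2*\<bar>y\<bar> < mf f s} \<union> {y. (y \<notin> I \<or> y = 0) \<and> s < 0}"
proof (rule set_eqI)
  fix y
  show "y \<in> {y. s < fs f y} \<longleftrightarrow> y \<in> {y. y \<in> I \<and> y \<noteq> 0 \<and> 2*\<bar>y\<bar> < mf f s} \<union> {y. (y \<notin> I \<or> y = 0) \<and> s < 0}"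
  proof (cases "y \<in> I \<and> y \<noteq> 0")
    case True
    then show ?thesis using fs_char[of y s] by auto
  next
    case False
    then have "fs f y = 0" unfolding fs_def by auto
    then show ?thesis using False by auto
  qed
qed

lemma fs_measurable[measurable]: "fs f \<in> borel_measurable borel"
proof (rule borel_measurable_iff_greater[THEN iffD2], intro allI)
  fix s
  have "{y. s < fs f y} \<in> sets borel" unfolding fs_level by measurable
  then show "{y \<in> space borel. s < fs f y} \<in> sets borel" by simp
qed

lemma fs_level_ae: "AE y in lborel. (y \<in> I \<and> s < fs f y) \<longleftrightarrow> 2*\<bar>y\<bar> < mf f s"
proof -
  have *: "(y \<in> I \<and> s < fs f y) \<longleftrightarrow> 2*\<bar>y\<bar> < mf f s" if "y \<noteq> 0" for y
  proof (cases "y \<in> I")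
    case True then show ?thesis using fs_char[OF True that] by simp
  next
    case False
    then have "pi \<le> \<bar>y\<bar>" by auto
    then show ?thesis using False mf_le[of f s] by auto
  qed
  show ?thesis by (rule AE_mp[OF AE_lborel_singleton[of 0]]) (use * in \<open>auto intro!: AE_I2\<close>)
qed

lemma mf_fs: "mf (fs f) s = mf f s"
proof -
  have "emeasure lborel {y \<in> I. fs f y > s} = emeasure lborel {y. 2*\<bar>y\<bar> < mf f s}"
    by (rule emeasure_eq_AE) (use fs_level_ae in auto)
  also have "{y. 2*\<bar>y\<bar> < mf f s} = {-(mf f s)/2 <..< mf f s / 2}" by (auto simp: abs_less_iff)
  also have "emeasure lborel \<dots> = ennreal (mf f s)" unfolding Ioo_em by simp
  finally show ?thesis unfolding em_mf using mf_nonneg by simp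
qed

end

lemma K_measurable[measurable]: "K \<in> borel_measurable borel"
  unfolding K_def by measurable

lemma mf_measurable[measurable]:
  assumes [measurable]: "F \<in> borel_measurable borel"
  shows "mf F \<in> borel_measurable borel"
proof -
  have "mono (\<lambda>t. - mf F t)" by (auto simp: mono_def intro: mf_mono)
  then have "(\<lambda>t. - mf F t) \<in> borel_measurable borel" by (rule borel_measurable_mono)
  then have "(\<lambda>t. - (- mf F t)) \<in> borel_measurable borel" by measurable
  then show ?thesis by simp
qed

definition Q :: "(real \<Rightarrow> real) \<Rightarrow> ennreal" where
  "Q F = (\<integral>\<^sup>+t. indicator {0..} t * K (mf F t) \<partial>lborel)"

definition gg :: "real \<Rightarrow> real \<Rightarrow> ennreal" where
  "gg x y = ennreal (G x y) * indicator I y"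

lemma gg_measurable[measurable]: "gg x \<in> borel_measurable borel"
  unfolding gg_def by measurable

lemma G_nonneg:
  assumes "-pi \<le> x" "x \<le> pi" "-pi \<le> y" "y \<le> pi"
  shows "0 \<le> G x y"
  unfolding G_min using assms by (auto intro!: divide_nonneg_pos mult_nonneg_nonneg)

lemma hh_alt: "hh x = (pi-x)*(pi+x)/(2*pi)"
  unfolding hh_def by (simp add: power2_eq_square algebra_simps)

lemma G_le_hh:
  assumes "-pi \<le> x" "x \<le> pi"
  shows "G x y \<le> hh x"
proof -
  have "min ((pi-x)*(y+pi)) ((pi+x)*(pi-y)) \<le> (pi-x)*(pi+x)"
  proof (cases "y \<le> x")
    case True
    then have "(pi-x)*(y+pi) \<le> (pi-x)*(x+pi)" using assms by (intro mult_left_mono) auto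
    then show ?thesis by (simp add: algebra_simps)
  next
    case False
    then have "(pi+x)*(pi-y) \<le> (pi+x)*(pi-x)" using assms by (intro mult_left_mono) auto
    then show ?thesis by (simp add: algebra_simps)
  qed
  then show ?thesis unfolding G_min hh_alt by (intro divide_right_mono) auto
qed

lemma hh_nonneg: "-pi \<le> x \<Longrightarrow> x \<le> pi \<Longrightarrow> 0 \<le> hh x"
  unfolding hh_alt by (auto intro!: divide_nonneg_pos mult_nonneg_nonneg)

lemma hh_lt: "x \<noteq> 0 \<Longrightarrow> hh x < pi/2"
proof -
  assume "x \<noteq> 0"
  then have "0 < x^2" by simp
  then show ?thesis unfolding hh_def using pi_gt_zero by (simp add: field_simps power2_eq_square)
qed

lemma G_pi: "y \<le> pi \<Longrightarrow> G pi y = 0"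
proof -
  assume "y \<le> pi"
  then have "0 \<le> (pi + pi) * (pi - y)" by simp
  then show ?thesis unfolding G_min by (simp add: min_def)
qed

lemma G_mpi: "-pi \<le> y \<Longrightarrow> G (-pi) y = 0"
proof -
  assume "-pi \<le> y"
  then have "0 \<le> (pi + pi) * (y + pi)" by simp
  then show ?thesis unfolding G_min by (simp add: min_def)
qed

lemma G0: "G 0 y = (pi - \<bar>y\<bar>)/2"
  unfolding G_def by simp

lemma G_lip:
  assumes "\<bar>y\<bar> \<le> pi"
  shows "\<bar>G x y - G x' y\<bar> \<le> \<bar>x - x'\<bar>"
proof -
  define a where "a = (x - x') * y / (2*pi)"
  define b where "b = \<bar>x - y\<bar> - \<bar>x' - y\<bar>"
  have "G x y - G x' y = - a - b/2"
    unfolding G_def a_def b_def by (simp add: field_simps)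
  moreover have "\<bar>a\<bar> \<le> \<bar>x - x'\<bar>/2"
  proof -
    have e: "\<bar>a\<bar> = \<bar>x - x'\<bar> * \<bar>y\<bar> / (2*pi)" unfolding a_def by (simp add: abs_mult)
    have "\<bar>x - x'\<bar> * \<bar>y\<bar> \<le> \<bar>x - x'\<bar> * pi" using assms by (intro mult_left_mono) auto
    then have "\<bar>x - x'\<bar> * \<bar>y\<bar> / (2*pi) \<le> \<bar>x - x'\<bar> * pi / (2*pi)" by (intro divide_right_mono) auto
    then show ?thesis unfolding e by simp
  qed
  moreover have "\<bar>b\<bar> \<le> \<bar>x - x'\<bar>" unfolding b_def by linarith
  ultimately show ?thesis by (auto simp: abs_le_iff)
qed

lemma AE_I:
  assumes "sets \<nu> = sets borel" "emeasure \<nu> (UNIV - I) = 0"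
  shows "AE y in \<nu>. y \<in> I"
proof (rule AE_I'[of "UNIV - I"])
  show "UNIV - I \<in> null_sets \<nu>" using assms by (auto simp: null_sets_def)
qed (use assms sets_eq_imp_space_eq[of \<nu> borel] in auto)

lemma u_nn:
  assumes "sets \<nu> = sets borel" "emeasure \<nu> (UNIV - I) = 0" "-pi \<le> x" "x \<le> pi"
  shows "u \<nu> x = enn2real (\<integral>\<^sup>+y. gg x y \<partial>\<nu>)"
proof -
  have m: "G x \<in> borel_measurable \<nu>" unfolding measurable_cong_sets[OF assms(1) refl] by simp
  have "enn2real (\<integral>\<^sup>+y. gg x y \<partial>\<nu>) = (\<integral>y. G x y \<partial>\<nu>)"
  proof (rule enn2real_nn_integral_eq_integral)
    show "AE y in \<nu>. gg x y = ennreal (G x y)" using AE_I[OF assms(1,2)] by eventually_elim (simp add: gg_def)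
    show "AE y in \<nu>. 0 \<le> G x y" using AE_I[OF assms(1,2)] by eventually_elim (use assms in \<open>auto intro: G_nonneg\<close>)
  qed (use m in auto)
  then show ?thesis unfolding u_def by simp
qed

lemma em_mf': "emeasure lborel {y. - pi < y \<and> y < pi \<and> t < F y} = ennreal (mf F t)"
  using em_mf[where f=F and s=t] by simp


lemma dens_layer:
  assumes [measurable]: "F \<in> borel_measurable borel"
  shows "(\<integral>\<^sup>+y. ennreal (F y) * gg x y \<partial>lborel) =
    (\<integral>\<^sup>+t. indicator {0..} t * (\<integral>\<^sup>+y. ennreal (G x y) * indicator {y \<in> I. t < F y} y \<partial>lborel) \<partial>lborel)"
proof -
  have "(\<integral>\<^sup>+y. ennreal (F y) * gg x y \<partial>lborel) =
    (\<integral>\<^sup>+t. indicator {0..} t * (\<integral>\<^sup>+y. indicator {y. t < F y} y * gg x y \<partial>lborel) \<partial>lborel)"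
    by (rule layer_cake) auto
  also have "\<dots> = (\<integral>\<^sup>+t. indicator {0..} t * (\<integral>\<^sup>+y. ennreal (G x y) * indicator {y \<in> I. t < F y} y \<partial>lborel) \<partial>lborel)"
  proof -
    have "\<And>t y. indicator {y. t < F y} y * gg x y = ennreal (G x y) * indicator {y \<in> I. t < F y} y"
      by (auto simp: gg_def indicator_def)
    then show ?thesis by simp
  qed
  finally show ?thesis .
qed

lemma dens_bound:
  assumes [measurable]: "F \<in> borel_measurable borel" and x: "-pi < x" "x < pi"
  shows "(\<integral>\<^sup>+y. ennreal (F y) * gg x y \<partial>lborel) \<le> ennreal (hh x) * Q F"
proof -
  have "(\<integral>\<^sup>+y. ennreal (F y) * gg x y \<partial>lborel) \<le> (\<integral>\<^sup>+t. indicator {0..} t * (ennreal (hh x) * K (mf F t)) \<partial>lborel)"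
    unfolding dens_layer[OF assms(1)]
  proof (rule nn_integral_mono)
    fix t
    have "(\<integral>\<^sup>+y. ennreal (G x y) * indicator {y \<in> I. t < F y} y \<partial>lborel) \<le> ennreal (hh x) * K (mf F t)"
      by (rule bound_E[OF x]) (auto simp: em_mf em_mf')
    then show "indicator {0..} t * (\<integral>\<^sup>+y. ennreal (G x y) * indicator {y \<in> I. t < F y} y \<partial>lborel)
       \<le> indicator {0..} t * (ennreal (hh x) * K (mf F t))" by (rule mult_left_mono) simp
  qed
  also have "\<dots> = ennreal (hh x) * Q F" unfolding Q_def
    by (subst nn_integral_cmult[symmetric]) (auto simp: mult_ac)
  finally show ?thesis .
qed

lemma dens_exact:
  assumes f[measurable]: "f \<in> borel_measurable borel" and nn: "\<And>x. 0 \<le> f x"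
  shows "(\<integral>\<^sup>+y. ennreal (fs f y) * gg 0 y \<partial>lborel) = ennreal (pi/2) * Q f"
proof -
  have "(\<integral>\<^sup>+y. ennreal (fs f y) * gg 0 y \<partial>lborel) = (\<integral>\<^sup>+t. indicator {0..} t * (ennreal (pi/2) * K (mf f t)) \<partial>lborel)"
    unfolding dens_layer[OF fs_measurable[OF f nn]]
  proof (rule nn_integral_cong)
    fix t
    have "(\<integral>\<^sup>+y. ennreal (G 0 y) * indicator {y \<in> I. t < fs f y} y \<partial>lborel) =
        (\<integral>\<^sup>+y. ennreal (G 0 y) * indicator {y. 2*\<bar>y\<bar> < mf f t} y \<partial>lborel)"
    proof (rule nn_integral_cong_AE)
      show "AE y in lborel. ennreal (G 0 y) * indicator {y \<in> I. t < fs f y} y = ennreal (G 0 y) * indicator {y. 2*\<bar>y\<bar> < mf f t} y"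
        using fs_level_ae[OF f nn, of t] by eventually_elim (auto simp: indicator_def)
    qed
    also have "\<dots> = ennreal (pi/2) * K (mf f t)" by (rule exact_B[OF mf_nonneg])
    finally show "indicator {0..} t * (\<integral>\<^sup>+y. ennreal (G 0 y) * indicator {y \<in> I. t < fs f y} y \<partial>lborel)
       = indicator {0..} t * (ennreal (pi/2) * K (mf f t))" by simp
  qed
  also have "\<dots> = ennreal (pi/2) * Q f" unfolding Q_def
    by (subst nn_integral_cmult[symmetric]) (auto simp: mult_ac)
  finally show ?thesis .
qed

lemma int_I_layer:
  assumes [measurable]: "F \<in> borel_measurable borel"
  shows "(\<integral>\<^sup>+y. ennreal (F y) * indicator I y \<partial>lborel) = (\<integral>\<^sup>+t. indicator {0..} t * ennreal (mf F t) \<partial>lborel)"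
proof -
  have "(\<integral>\<^sup>+y. ennreal (F y) * indicator I y \<partial>lborel) =
    (\<integral>\<^sup>+t. indicator {0..} t * (\<integral>\<^sup>+y. indicator {y. t < F y} y * indicator I y \<partial>lborel) \<partial>lborel)"
    by (rule layer_cake) auto
  also have "\<dots> = (\<integral>\<^sup>+t. indicator {0..} t * ennreal (mf F t) \<partial>lborel)"
  proof (rule nn_integral_cong)
    fix t
    have "(\<integral>\<^sup>+y. indicator {y. t < F y} y * indicator I y \<partial>lborel) = emeasure lborel {y \<in> I. t < F y}"
    proof -
      have "\<And>y. indicator {y. t < F y} y * indicator I y = (indicator {y \<in> I. t < F y} y :: ennreal)"
        by (auto simp: indicator_def)
      then show ?thesis by simp
    qed
    then show "indicator {0..} t * (\<integral>\<^sup>+y. indicator {y. t < F y} y * indicator I y \<partial>lborel) = indicator {0..} t * ennreal (mf F t)"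
      by (simp add: em_mf em_mf')
  qed
  finally show ?thesis .
qed

lemma int_I_fs:
  assumes f[measurable]: "f \<in> borel_measurable borel" and nn: "\<And>x. 0 \<le> f x"
  shows "(\<integral>\<^sup>+y. ennreal (fs f y) * indicator I y \<partial>lborel) = (\<integral>\<^sup>+y. ennreal (f y) * indicator I y \<partial>lborel)"
  unfolding int_I_layer[OF f] int_I_layer[OF fs_measurable[OF f nn]] mf_fs[OF f nn] ..

locale decomp =
  fixes \<nu> s :: "real measure" and F :: "real \<Rightarrow> real"
  assumes sn: "sets \<nu> = sets borel" and ss: "sets s = sets borel"
    and Fm[measurable]: "F \<in> borel_measurable borel" and Fnn: "\<And>x. 0 \<le> F x"
    and eq: "\<And>A. A \<in> sets borel \<Longrightarrow> emeasure \<nu> A = (\<integral>\<^sup>+x. ennreal (F x) * indicator A x \<partial>lborel) + emeasure s A"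
    and sI: "emeasure s (UNIV - I) = 0"
begin

lemma int_split:
  assumes [measurable]: "g \<in> borel_measurable borel"
  shows "(\<integral>\<^sup>+x. g x \<partial>\<nu>) = (\<integral>\<^sup>+x. ennreal (F x) * g x \<partial>lborel) + (\<integral>\<^sup>+x. g x \<partial>s)"
  by (rule decomp_nn_integral[OF sn ss _ eq]) auto

lemma sing_bound:
  assumes x: "-pi \<le> x" "x \<le> pi"
  shows "(\<integral>\<^sup>+y. gg x y \<partial>s) \<le> ennreal (hh x) * emeasure s I"
proof -
  have "(\<integral>\<^sup>+y. gg x y \<partial>s) \<le> (\<integral>\<^sup>+y. ennreal (hh x) * indicator I y \<partial>s)"
    by (rule nn_integral_mono) (auto simp: gg_def indicator_def intro!: ennreal_leI G_le_hh x)
  also have "\<dots> = ennreal (hh x) * emeasure s I"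
    by (rule nn_integral_cmult_indicator) (simp add: ss)
  finally show ?thesis .
qed

lemma main_bound:
  assumes x: "-pi < x" "x < pi"
  shows "(\<integral>\<^sup>+y. gg x y \<partial>\<nu>) \<le> ennreal (hh x) * (Q F + emeasure s I)"
proof -
  have "(\<integral>\<^sup>+y. gg x y \<partial>\<nu>) = (\<integral>\<^sup>+y. ennreal (F y) * gg x y \<partial>lborel) + (\<integral>\<^sup>+y. gg x y \<partial>s)"
    by (rule int_split) simp
  also have "\<dots> \<le> ennreal (hh x) * Q F + ennreal (hh x) * emeasure s I"
    by (intro add_mono dens_bound sing_bound) (use x in auto)
  finally show ?thesis by (simp add: distrib_left)
qed

end

lemma decomp_exists:
  fixes \<mu> :: "real measure"
  assumes sm: "sets \<mu> = sets borel" and fin: "emeasure \<mu> UNIV < \<infinity>"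
  shows "\<exists>f s. lebesgue_decomp \<mu> f s"
proof -
  have sp: "space \<mu> = UNIV" using sets_eq_imp_space_eq[OF sm] by simp
  have finA: "emeasure \<mu> A \<noteq> \<infinity>" for A
    using emeasure_mono[of A UNIV \<mu>] fin sm by (auto simp: top_unique)
  define NS :: "real set set" where "NS = null_sets lborel"
  have ne: "NS \<noteq> {}" unfolding NS_def by auto
  obtain g :: "nat \<Rightarrow> ennreal" where g: "range g \<subseteq> emeasure \<mu> ` NS" "Sup (emeasure \<mu> ` NS) = Sup (range g)"
    using ennreal_SUP_countable_SUP[OF ne, of "emeasure \<mu>"] by auto
  have "\<forall>n. \<exists>N. N \<in> NS \<and> emeasure \<mu> N = g n" using g(1) by (metis image_iff range_subsetD)
  then obtain Ns where Ns: "\<And>n. Ns n \<in> NS" "\<And>n. emeasure \<mu> (Ns n) = g n" by metis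
  define N where "N = (\<Union>n. Ns n)"
  have NN: "N \<in> null_sets lborel" unfolding N_def using Ns(1) unfolding NS_def by auto
  then have Nb[measurable]: "N \<in> sets borel" by auto
  have Nmax: "emeasure \<mu> A \<le> emeasure \<mu> N" if "A \<in> null_sets lborel" for A
  proof -
    have "emeasure \<mu> A \<le> Sup (emeasure \<mu> ` NS)" using that unfolding NS_def by (auto intro: SUP_upper)
    also have "\<dots> = Sup (range g)" by (rule g(2))
    also have "\<dots> \<le> emeasure \<mu> N"
    proof (rule SUP_least)
      fix n
      have "Ns n \<subseteq> N" unfolding N_def by auto
      then show "g n \<le> emeasure \<mu> N" unfolding Ns(2)[symmetric]
        by (rule emeasure_mono) (use Nb sm in auto)
    qed
    finally show ?thesis .
  qed
  define \<nu> where "\<nu> = density \<mu> (indicator (UNIV - N))"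
  have im[measurable]: "indicator (UNIV - N) \<in> borel_measurable \<mu>" "indicator N \<in> borel_measurable \<mu>"
    unfolding measurable_cong_sets[OF sm refl] by auto
  have \<nu>A: "emeasure \<nu> A = emeasure \<mu> (A - N)" if "A \<in> sets borel" for A
  proof -
    have "emeasure \<nu> A = (\<integral>\<^sup>+x. indicator (UNIV - N) x * indicator A x \<partial>\<mu>)"
      unfolding \<nu>_def by (rule emeasure_density) (use that sm in auto)
    also have "\<dots> = (\<integral>\<^sup>+x. indicator (A - N) x \<partial>\<mu>)"
      by (intro nn_integral_cong) (auto simp: indicator_def)
    also have "\<dots> = emeasure \<mu> (A - N)" using that sm by simp
    finally show ?thesis .
  qed
  have sN: "sets \<nu> = sets lborel" unfolding \<nu>_def using sm by simp
  have ac: "absolutely_continuous lborel \<nu>"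
    unfolding absolutely_continuous_def
  proof
    fix A :: "real set" assume A: "A \<in> null_sets lborel"
    then have Ab: "A \<in> sets borel" by auto
    have "A \<union> N \<in> null_sets lborel" using A NN by auto
    then have "emeasure \<mu> (A \<union> N) \<le> emeasure \<mu> N" by (rule Nmax)
    moreover have "emeasure \<mu> (A \<union> N) = emeasure \<mu> (A - N) + emeasure \<mu> N"
      by (subst plus_emeasure) (use Ab sm in \<open>auto simp: Un_Diff_cancel2\<close>)
    ultimately have "emeasure \<mu> N + emeasure \<mu> (A - N) \<le> emeasure \<mu> N + 0" by (simp add: add.commute)
    then have "emeasure \<mu> (A - N) \<le> 0"
      using finA[of N] by (simp only: ennreal_add_left_cancel_le) simp
    then have "emeasure \<nu> A = 0" using \<nu>A[OF Ab] by simp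
    then show "A \<in> null_sets \<nu>" using Ab sN by auto
  qed
  obtain h where h[measurable]: "h \<in> borel_measurable lborel" and hd: "density lborel h = \<nu>"
    using sigma_finite_measure.Radon_Nikodym[OF sigma_finite_lborel ac sN] by blast
  have hb[measurable]: "h \<in> borel_measurable borel" using h by simp
  have "(\<integral>\<^sup>+x. h x \<partial>lborel) = emeasure \<nu> UNIV"
    using emeasure_density[OF h, of UNIV] hd by simp
  also have "\<dots> = emeasure \<mu> (UNIV - N)" by (rule \<nu>A) simp
  finally have "(\<integral>\<^sup>+x. h x \<partial>lborel) \<noteq> \<infinity>" using finA by simp
  then have hfin: "AE x in lborel. h x \<noteq> \<infinity>" by (rule nn_integral_noteq_infinite[OF h])
  define f where "f x = enn2real (h x)" for x
  define s where "s = density \<mu> (indicator N)"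
  have sA: "emeasure s A = emeasure \<mu> (A \<inter> N)" if "A \<in> sets borel" for A
  proof -
    have "emeasure s A = (\<integral>\<^sup>+x. indicator N x * indicator A x \<partial>\<mu>)"
      unfolding s_def by (rule emeasure_density) (use that sm in auto)
    also have "\<dots> = (\<integral>\<^sup>+x. indicator (A \<inter> N) x \<partial>\<mu>)"
      by (intro nn_integral_cong) (auto simp: indicator_def)
    also have "\<dots> = emeasure \<mu> (A \<inter> N)" using that sm by simp
    finally show ?thesis .
  qed
  have "lebesgue_decomp \<mu> f s"
    unfolding lebesgue_decomp_def
  proof (intro conjI ballI allI)
    show "f \<in> borel_measurable borel" unfolding f_def by measurable
    show "0 \<le> f x" for x unfolding f_def by simp
    show "sets s = sets borel" unfolding s_def using sm by simp
    show "\<exists>N\<in>sets borel. emeasure lborel N = 0 \<and> emeasure s (UNIV - N) = 0"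
      using NN by (intro bexI[of _ N]) (auto simp: sA Diff_Int_distrib2)
    fix A :: "real set" assume A: "A \<in> sets borel"
    have "(\<integral>\<^sup>+x\<in>A. ennreal (f x) \<partial>lborel) = (\<integral>\<^sup>+x. h x * indicator A x \<partial>lborel)"
      by (rule nn_integral_cong_AE) (use hfin in \<open>eventually_elim, auto simp: f_def less_top\<close>)
    also have "\<dots> = emeasure \<nu> A" using emeasure_density[OF h, of A] hd A by simp
    also have "\<dots> = emeasure \<mu> (A - N)" by (rule \<nu>A[OF A])
    finally have 1: "(\<integral>\<^sup>+x\<in>A. ennreal (f x) \<partial>lborel) = emeasure \<mu> (A - N)" .
    have "emeasure \<mu> A = emeasure \<mu> (A - N) + emeasure \<mu> (A \<inter> N)"
      by (subst plus_emeasure) (use A sm in \<open>auto simp: Un_Diff_Int\<close>)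
    then show "emeasure \<mu> A = (\<integral>\<^sup>+x\<in>A. ennreal (f x) \<partial>lborel) + emeasure s A"
      unfolding 1 sA[OF A] .
  qed
  then show ?thesis by blast
qed

lemma sets_mo: "sets (measure_of UNIV (sets borel) \<phi>) = (sets borel :: real set set)"
proof -
  have "sets (measure_of UNIV (sets borel) \<phi>) = sigma_sets UNIV (sets borel :: real set set)"
    by (rule sets_measure_of) auto
  also have "\<dots> = sets borel" using sets.sigma_sets_eq[of borel] by simp
  finally show ?thesis .
qed

lemma emeasure_mo:
  fixes D P :: "real measure"
  assumes sD: "sets D = sets borel" and sP: "sets P = sets borel"
    and phi: "\<And>A. A \<in> sets borel \<Longrightarrow> \<phi> A = emeasure D A + emeasure P A"
    and A: "A \<in> sets borel"
  shows "emeasure (measure_of UNIV (sets borel) \<phi>) A = \<phi> A"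
proof (rule emeasure_measure_of_sigma)
  show "sigma_algebra UNIV (sets borel :: real set set)" using sets.sigma_algebra_axioms[of borel] by simp
  show "positive (sets borel) \<phi>" unfolding positive_def using phi by simp
  show "countably_additive (sets borel) \<phi>" unfolding countably_additive_def
  proof (intro allI impI)
    fix F :: "nat \<Rightarrow> real set"
    assume F: "range F \<subseteq> sets borel" "disjoint_family F" "\<Union> (range F) \<in> sets borel"
    have "(\<Sum>i. \<phi> (F i)) = (\<Sum>i. emeasure D (F i) + emeasure P (F i))" using F(1) phi by auto
    also have "\<dots> = (\<Sum>i. emeasure D (F i)) + (\<Sum>i. emeasure P (F i))"
      by (rule suminf_add[OF summableI summableI, symmetric])
    also have "\<dots> = emeasure D (\<Union>i. F i) + emeasure P (\<Union>i. F i)"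
      using F sD sP by (simp add: suminf_emeasure)
    also have "\<dots> = \<phi> (\<Union>i. F i)" using phi F(3) by simp
    finally show "(\<Sum>i. \<phi> (F i)) = \<phi> (\<Union> (range F))" .
  qed
qed (use A in auto)

definition pm :: "ennreal \<Rightarrow> real measure" where
  "pm c = measure_of UNIV (sets borel) (\<lambda>A. c * indicator A 0)"

lemma sets_pm: "sets (pm c) = sets borel" unfolding pm_def by (rule sets_mo)

lemma emeasure_pm: "A \<in> sets borel \<Longrightarrow> emeasure (pm c) A = c * indicator A 0"
  unfolding pm_def
proof (rule emeasure_measure_of_sigma)
  show "sigma_algebra UNIV (sets borel :: real set set)" using sets.sigma_algebra_axioms[of borel] by simp
  show "positive (sets borel) (\<lambda>A. c * indicator A (0::real))" unfolding positive_def by simp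
  show "countably_additive (sets borel) (\<lambda>A. c * indicator A (0::real))" unfolding countably_additive_def
  proof (intro allI impI)
    fix F :: "nat \<Rightarrow> real set"
    assume F: "range F \<subseteq> sets borel" "disjoint_family F" "\<Union> (range F) \<in> sets borel"
    show "(\<Sum>i. c * indicator (F i) (0::real)) = c * indicator (\<Union> (range F)) 0"
      using suminf_indicator[OF F(2), of 0] by simp
  qed
qed

lemma nn_integral_pm:
  assumes [measurable]: "g \<in> borel_measurable borel"
  shows "(\<integral>\<^sup>+x. g x \<partial>pm c) = c * g 0"
proof -
  have sp: "space (pm c) = UNIV" using sets_eq_imp_space_eq[OF sets_pm[of c]] by simp
  have "AE x in pm c. x = 0"
  proof (rule AE_I'[of "UNIV - {0}"])
    show "UNIV - {0} \<in> null_sets (pm c)" by (auto simp: null_sets_def sets_pm emeasure_pm)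
  qed (auto simp: sp)
  then have "(\<integral>\<^sup>+x. g x \<partial>pm c) = (\<integral>\<^sup>+x. g 0 \<partial>pm c)"
    by (intro nn_integral_cong_AE) auto
  also have "\<dots> = g 0 * emeasure (pm c) UNIV" using sp by simp
  also have "\<dots> = c * g 0" by (simp add: emeasure_pm mult.commute)
  finally show ?thesis .
qed

lemma hh_le_half: "hh z \<le> pi/2"
proof -
  have "0 \<le> z*z" by simp
  then show ?thesis unfolding hh_def using pi_gt_zero by (simp add: field_simps power2_eq_square)
qed

lemma u_lip:
  fixes \<nu> :: "real measure"
  assumes sn: "sets \<nu> = sets borel" and fin: "emeasure \<nu> UNIV < \<infinity>" and nI: "emeasure \<nu> (UNIV - I) = 0"
    and x: "-pi \<le> x" "x \<le> pi" and x': "-pi \<le> x'" "x' \<le> pi"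
  shows "u \<nu> x - u \<nu> x' \<le> \<bar>x - x'\<bar> * measure \<nu> UNIV"
proof -
  have sp: "space \<nu> = UNIV" using sets_eq_imp_space_eq[OF sn] by simp
  interpret finite_measure \<nu> by (rule finite_measureI) (use fin sp in auto)
  have AI: "AE y in \<nu>. y \<in> I" by (rule AE_I[OF sn nI])
  have int: "integrable \<nu> (G z)" if "-pi \<le> z" "z \<le> pi" for z
  proof (rule integrable_const_bound)
    show "AE y in \<nu>. norm (G z y) \<le> pi/2" using AI
    proof eventually_elim
      case (elim y)
      then have "0 \<le> G z y" "G z y \<le> hh z" using that by (auto intro: G_nonneg G_le_hh)
      moreover have "hh z \<le> pi/2" by (rule hh_le_half)
      ultimately show ?case by simp
    qed
    show "G z \<in> borel_measurable \<nu>" unfolding measurable_cong_sets[OF sn refl] by simp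
  qed
  have "u \<nu> x - u \<nu> x' = (\<integral>y. G x y - G x' y \<partial>\<nu>)"
    unfolding u_def using int[OF x] int[OF x'] by simp
  also have "\<dots> \<le> (\<integral>y. \<bar>x - x'\<bar> \<partial>\<nu>)"
  proof (rule integral_mono_AE)
    show "integrable \<nu> (\<lambda>y. G x y - G x' y)" using int[OF x] int[OF x'] by simp
    show "AE y in \<nu>. G x y - G x' y \<le> \<bar>x - x'\<bar>" using AI
    proof eventually_elim
      case (elim y)
      then have "\<bar>y\<bar> \<le> pi" by auto
      then show ?case using G_lip[of y x x'] by simp
    qed
  qed simp
  also have "\<dots> = \<bar>x - x'\<bar> * measure \<nu> UNIV" using sp by simp
  finally show ?thesis .
qed

lemma u_cont:
  fixes \<nu> :: "real measure"
  assumes sn: "sets \<nu> = sets borel" and fin: "emeasure \<nu> UNIV < \<infinity>" and nI: "emeasure \<nu> (UNIV - I) = 0"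
  shows "continuous_on {-pi..pi} (u \<nu>)"
proof (rule lipschitz_on_continuous_on[of "measure \<nu> UNIV"], rule lipschitz_onI)
  fix x y assume "x \<in> {-pi..pi}" "y \<in> {-pi..pi}"
  then have "u \<nu> x - u \<nu> y \<le> \<bar>x - y\<bar> * measure \<nu> UNIV" "u \<nu> y - u \<nu> x \<le> \<bar>y - x\<bar> * measure \<nu> UNIV"
    by (auto intro!: u_lip[OF sn fin nI])
  then show "dist (u \<nu> x) (u \<nu> y) \<le> measure \<nu> UNIV * dist x y"
    by (simp add: dist_real_def abs_minus_commute mult.commute abs_le_iff)
qed simp

lemma u_max:
  fixes \<nu> :: "real measure"
  assumes sn: "sets \<nu> = sets borel" and fin: "emeasure \<nu> UNIV < \<infinity>" and nI: "emeasure \<nu> (UNIV - I) = 0"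
  shows "\<exists>x\<in>{-pi..pi}. \<forall>y\<in>{-pi..pi}. u \<nu> y \<le> u \<nu> x"
  by (rule continuous_attains_sup[OF compact_Icc _ u_cont[OF assms]]) (use pi_gt_zero in auto)

locale symctx =
  fixes \<mu> :: "real measure"
  assumes fb: "finite_borel_measure_on_interval \<mu>"
begin

definition "p = (SOME (f, s). lebesgue_decomp \<mu> f s)"
definition "f = fst p"
definition "s = snd p"
definition "M = emeasure s I"

lemma sm: "sets \<mu> = sets borel" and finmu: "emeasure \<mu> UNIV < \<infinity>" and nz: "emeasure \<mu> UNIV \<noteq> 0"
  and muI: "emeasure \<mu> (UNIV - I) = 0"
  using fb unfolding finite_borel_measure_on_interval_def by auto

lemma ld: "lebesgue_decomp \<mu> f s"
proof -
  obtain f0 s0 where "lebesgue_decomp \<mu> f0 s0" using decomp_exists[OF sm finmu] by blast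
  then have "\<exists>q. case q of (a, b) \<Rightarrow> lebesgue_decomp \<mu> a b" by auto
  then have "case p of (a, b) \<Rightarrow> lebesgue_decomp \<mu> a b" unfolding p_def by (rule someI_ex)
  then show ?thesis unfolding f_def s_def by (simp add: case_prod_beta)
qed

lemma f_meas[measurable]: "f \<in> borel_measurable borel" and f_nn: "\<And>x. 0 \<le> f x"
  and ss: "sets s = sets borel"
  and eqmu: "\<And>A. A \<in> sets borel \<Longrightarrow> emeasure \<mu> A = (\<integral>\<^sup>+x. ennreal (f x) * indicator A x \<partial>lborel) + emeasure s A"
  using ld unfolding lebesgue_decomp_def by auto

lemma sI: "emeasure s (UNIV - I) = 0"
proof -
  have "emeasure s (UNIV - I) \<le> emeasure \<mu> (UNIV - I)" using eqmu[of "UNIV - I"] by simp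
  then show ?thesis using muI by simp
qed

lemma dmu: "decomp \<mu> s f"
  by (rule decomp.intro) (use sm ss f_nn eqmu sI in auto)

lemma M_fin: "M < \<infinity>"
proof -
  have "M \<le> emeasure \<mu> I" unfolding M_def using eqmu[of I] by simp
  also have "\<dots> \<le> emeasure \<mu> UNIV" by (rule emeasure_mono) (use sm in auto)
  finally show ?thesis using finmu by simp
qed

lemma sym_def': "symmetrization \<mu> = measure_of UNIV (sets borel)
    (\<lambda>A. (\<integral>\<^sup>+x\<in>A. ennreal (sym_rearr f x) \<partial>lborel) + M * indicator A 0)"
  unfolding symmetrization_def p_def[symmetric] M_def f_def s_def by (simp add: Let_def case_prod_beta)

lemma fs_meas[measurable]: "fs f \<in> borel_measurable borel"
  by (rule fs_measurable[OF f_meas f_nn])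

lemma sym_fs_int: "(\<integral>\<^sup>+x. ennreal (sym_rearr f x) * indicator A x \<partial>lborel) = (\<integral>\<^sup>+x. ennreal (fs f x) * indicator A x \<partial>lborel)"
  by (rule nn_integral_cong_AE) (use AE_lborel_singleton[of 0] in \<open>eventually_elim, simp add: sym_rearr_fs\<close>)

lemma emeasure_sym:
  assumes A: "A \<in> sets borel"
  shows "emeasure (symmetrization \<mu>) A = (\<integral>\<^sup>+x. ennreal (fs f x) * indicator A x \<partial>lborel) + emeasure (pm M) A"
proof -
  have "emeasure (symmetrization \<mu>) A = (\<integral>\<^sup>+x\<in>A. ennreal (sym_rearr f x) \<partial>lborel) + M * indicator A 0"
    unfolding sym_def'
  proof (rule emeasure_mo[where D="density lborel (\<lambda>x. ennreal (fs f x))" and P="pm M"])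
    fix B :: "real set" assume B: "B \<in> sets borel"
    show "(\<integral>\<^sup>+x\<in>B. ennreal (sym_rearr f x) \<partial>lborel) + M * indicator B 0 =
      emeasure (density lborel (\<lambda>x. ennreal (fs f x))) B + emeasure (pm M) B"
      using B by (simp add: emeasure_density emeasure_pm sym_fs_int)
  qed (use A in \<open>auto simp: sets_pm\<close>)
  then show ?thesis using A by (simp add: emeasure_pm sym_fs_int)
qed

lemma sets_sym: "sets (symmetrization \<mu>) = sets borel"
  unfolding sym_def' by (rule sets_mo)

lemma dsym: "decomp (symmetrization \<mu>) (pm M) (fs f)"
proof (rule decomp.intro)
  show "emeasure (pm M) (UNIV - I) = 0" by (simp add: emeasure_pm)
qed (use sets_sym sets_pm fs_nonneg[OF f_meas f_nn] emeasure_sym in auto)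

lemma fs_out: "y \<notin> I \<Longrightarrow> fs f y = 0" unfolding fs_def by auto

lemma symI: "emeasure (symmetrization \<mu>) (UNIV - I) = 0"
proof -
  have "(\<lambda>x. ennreal (fs f x) * indicator (UNIV - I) x) = (\<lambda>x. 0)"
  proof
    fix x show "ennreal (fs f x) * indicator (UNIV - I) x = 0"
      by (cases "x \<in> I") (auto simp: fs_out)
  qed
  then have "(\<integral>\<^sup>+x. ennreal (fs f x) * indicator (UNIV - I) x \<partial>lborel) = 0" by simp
  then show ?thesis by (simp add: emeasure_sym emeasure_pm)
qed

lemma sym_fin: "emeasure (symmetrization \<mu>) UNIV < \<infinity>"
proof -
  have "(\<integral>\<^sup>+x. ennreal (fs f x) * indicator UNIV x \<partial>lborel) = (\<integral>\<^sup>+x. ennreal (fs f x) * indicator I x \<partial>lborel)"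
    by (rule nn_integral_cong) (auto simp: indicator_def fs_out)
  also have "\<dots> = (\<integral>\<^sup>+x. ennreal (f x) * indicator I x \<partial>lborel)" by (rule int_I_fs[OF f_meas f_nn])
  also have "\<dots> \<le> emeasure \<mu> I" using eqmu[of I] by simp
  also have "\<dots> \<le> emeasure \<mu> UNIV" by (rule emeasure_mono) (use sm in auto)
  finally have "(\<integral>\<^sup>+x. ennreal (fs f x) * indicator UNIV x \<partial>lborel) < \<infinity>" using finmu by simp
  then show ?thesis using M_fin by (simp add: emeasure_sym emeasure_pm)
qed

end

context symctx
begin

definition "Phi = Q f + M"

lemma Q_fs: "Q (fs f) = Q f"
  unfolding Q_def mf_fs[OF f_meas f_nn] ..

lemma bound_mu: "-pi < x \<Longrightarrow> x < pi \<Longrightarrow> (\<integral>\<^sup>+y. gg x y \<partial>\<mu>) \<le> ennreal (hh x) * Phi"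
  using decomp.main_bound[OF dmu] unfolding Phi_def M_def by simp

lemma bound_sym: "-pi < x \<Longrightarrow> x < pi \<Longrightarrow> (\<integral>\<^sup>+y. gg x y \<partial>symmetrization \<mu>) \<le> ennreal (hh x) * Phi"
  using decomp.main_bound[OF dsym] unfolding Phi_def Q_fs by (simp add: emeasure_pm)

lemma gg00: "gg 0 0 = ennreal (pi/2)" unfolding gg_def G0 by simp

lemma exact_sym: "(\<integral>\<^sup>+y. gg 0 y \<partial>symmetrization \<mu>) = ennreal (pi/2) * Phi"
proof -
  have "(\<integral>\<^sup>+y. gg 0 y \<partial>symmetrization \<mu>) = (\<integral>\<^sup>+y. ennreal (fs f y) * gg 0 y \<partial>lborel) + (\<integral>\<^sup>+y. gg 0 y \<partial>pm M)"
    by (rule decomp.int_split[OF dsym]) simp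
  also have "\<dots> = ennreal (pi/2) * Q f + M * ennreal (pi/2)"
    by (simp add: dens_exact[OF f_meas f_nn] nn_integral_pm gg00)
  finally show ?thesis unfolding Phi_def by (simp add: distrib_left mult.commute)
qed

lemma gg0_le: "gg 0 y \<le> ennreal (pi/2)"
  unfolding gg_def G0 by (auto simp: indicator_def intro!: ennreal_leI)

lemma Phi_fin: "Phi < \<infinity>"
proof -
  have sp: "space (symmetrization \<mu>) = UNIV" using sets_eq_imp_space_eq[OF sets_sym] by simp
  have "ennreal (pi/2) * Phi \<le> (\<integral>\<^sup>+y. ennreal (pi/2) \<partial>symmetrization \<mu>)"
    unfolding exact_sym[symmetric] by (rule nn_integral_mono) (rule gg0_le)
  also have "\<dots> = ennreal (pi/2) * emeasure (symmetrization \<mu>) UNIV" using sp by simp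
  also have "\<dots> < \<infinity>" using sym_fin by (simp add: ennreal_mult_less_top)
  finally have "ennreal (pi/2) * Phi < \<infinity>" .
  then show ?thesis by (auto simp: ennreal_mult_less_top)
qed

lemma gg_pm_pi: "x = pi \<or> x = -pi \<Longrightarrow> gg x y = 0"
  unfolding gg_def by (cases "y \<in> I") (auto simp: G_pi G_mpi)

lemma hh_pm_pi: "x = pi \<or> x = -pi \<Longrightarrow> hh x = 0"
  unfolding hh_def by auto

lemma u_le_generic:
  assumes sn: "sets \<nu> = sets borel" and nI: "emeasure \<nu> (UNIV - I) = 0"
    and b: "\<And>x. -pi < x \<Longrightarrow> x < pi \<Longrightarrow> (\<integral>\<^sup>+y. gg x y \<partial>\<nu>) \<le> ennreal (hh x) * Phi"
    and x: "-pi \<le> x" "x \<le> pi"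
  shows "u \<nu> x \<le> hh x * enn2real Phi"
proof (cases "x = pi \<or> x = -pi")
  case True
  then have "gg x = (\<lambda>y. 0)" by (intro ext gg_pm_pi)
  then have "u \<nu> x = 0" unfolding u_nn[OF sn nI x] by simp
  then show ?thesis using True by (simp add: hh_pm_pi)
next
  case False
  then have x': "-pi < x" "x < pi" using x by auto
  have "u \<nu> x = enn2real (\<integral>\<^sup>+y. gg x y \<partial>\<nu>)" by (rule u_nn[OF sn nI x])
  also have "\<dots> \<le> enn2real (ennreal (hh x) * Phi)"
    by (rule enn2real_mono[OF b[OF x']]) (use Phi_fin in \<open>simp add: ennreal_mult_less_top\<close>)
  also have "\<dots> = hh x * enn2real Phi" using hh_nonneg[OF x] by (simp add: enn2real_mult)
  finally show ?thesis .
qed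

lemma u_mu_le: "-pi \<le> x \<Longrightarrow> x \<le> pi \<Longrightarrow> u \<mu> x \<le> hh x * enn2real Phi"
  by (rule u_le_generic[OF sm muI bound_mu])

lemma u_sym_le: "-pi \<le> x \<Longrightarrow> x \<le> pi \<Longrightarrow> u (symmetrization \<mu>) x \<le> hh x * enn2real Phi"
  by (rule u_le_generic[OF sets_sym symI bound_sym])

lemma u_sym0: "u (symmetrization \<mu>) 0 = pi/2 * enn2real Phi"
  unfolding u_nn[OF sets_sym symI, of 0, simplified] exact_sym by (simp add: enn2real_mult)

lemma u_le_sym0: "-pi \<le> x \<Longrightarrow> x \<le> pi \<Longrightarrow> hh x * enn2real Phi \<le> u (symmetrization \<mu>) 0"
  unfolding u_sym0 using hh_le_half[of x] by (intro mult_right_mono) auto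

end

lemma ennreal_split_eq:
  fixes a b c d :: ennreal
  assumes "a \<le> c" "b \<le> d" "a + b = c + d" "c + d < \<infinity>"
  shows "a = c \<and> b = d"
proof (rule ccontr)
  assume "\<not> (a = c \<and> b = d)"
  then have "a < c \<or> b < d" using assms(1,2) by auto
  have cf: "c < \<infinity>" "d < \<infinity>" using assms(4) by (auto simp: top_unique)
  have bf: "b < \<infinity>" "a < \<infinity>" using assms(1,2) cf by auto
  have "a + b < c + d"
  proof (cases "a < c")
    case True
    have "b + a < b + c" using True bf by (simp add: ennreal_add_left_cancel_less)
    also have "\<dots> \<le> d + c" using assms(2) by (simp add: add_right_mono)
    finally show ?thesis by (simp add: add.commute)
  next
    case False
    then have "b < d" using \<open>a < c \<or> b < d\<close> by simp
    have "a + b < a + d" using \<open>b < d\<close> bf by (simp add: ennreal_add_left_cancel_less)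
    also have "\<dots> \<le> c + d" using assms(1) by (simp add: add_right_mono)
    finally show ?thesis .
  qed
  then show False using assms(3) by simp
qed

lemma ae_le_from_levels:
  fixes a b :: "real \<Rightarrow> real"
  assumes [measurable]: "a \<in> borel_measurable borel" "b \<in> borel_measurable borel"
    and lev: "AE t in lborel. emeasure lborel ({y \<in> I. t < a y} - {y. t < b y}) = 0"
  shows "AE y in lborel. y \<in> I \<longrightarrow> a y \<le> b y"
proof -
  have e: "ennreal (a y - b y) = (\<integral>\<^sup>+t. indicator {b y..<a y} t \<partial>lborel)" for y
    by (cases "b y \<le> a y") (auto simp: ennreal_neg)
  have "(\<integral>\<^sup>+y. indicator I y * ennreal (a y - b y) \<partial>lborel) = (\<integral>\<^sup>+y. (\<integral>\<^sup>+t. indicator I y * indicator {b y..<a y} t \<partial>lborel) \<partial>lborel)"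
    by (subst e, subst nn_integral_cmult) auto
  also have "\<dots> = (\<integral>\<^sup>+t. (\<integral>\<^sup>+y. indicator I y * indicator {b y..<a y} t \<partial>lborel) \<partial>lborel)"
  proof (rule lborel_pair.Fubini'[symmetric])
    have "(\<lambda>(y, t). indicator I y * indicator {b y..<a y} t) = (\<lambda>p. indicator {p. fst p \<in> I \<and> b (fst p) \<le> snd p \<and> snd p < a (fst p)} p :: ennreal)"
      by (auto simp: fun_eq_iff indicator_def)
    then show "case_prod (\<lambda>y t. indicator I y * indicator {b y..<a y} t :: ennreal) \<in> borel_measurable (lborel \<Otimes>\<^sub>M lborel)"
      by simp measurable
  qed
  also have "\<dots> = (\<integral>\<^sup>+t. emeasure lborel ({y \<in> I. t < a y} - {y. t < b y}) \<partial>lborel)"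
  proof (rule nn_integral_cong)
    fix t
    have "(\<lambda>y. indicator I y * indicator {b y..<a y} t :: ennreal) = indicator ({y \<in> I. t < a y} - {y. t < b y})"
      by (auto simp: fun_eq_iff indicator_def not_less)
    then show "(\<integral>\<^sup>+y. indicator I y * indicator {b y..<a y} t \<partial>lborel) = emeasure lborel ({y \<in> I. t < a y} - {y. t < b y})"
      by simp
  qed
  also have "\<dots> = (\<integral>\<^sup>+t. 0 \<partial>lborel)"
    using nn_integral_cong_AE[OF lev] by simp
  finally have "(\<integral>\<^sup>+y. indicator I y * ennreal (a y - b y) \<partial>lborel) = 0" by simp
  then have "AE y in lborel. indicator I y * ennreal (a y - b y) = 0"
    by (subst (asm) nn_integral_0_iff_AE) auto
  then show ?thesis by eventually_elim (auto simp: indicator_def ennreal_eq_0_iff)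
qed

lemma bathtub_strict:
  fixes E :: "real set" and m :: real
  assumes E[measurable]: "E \<in> sets borel" and m: "0 \<le> m" "m \<le> 2*pi"
    and Em: "emeasure lborel E = ennreal m"
    and eq: "(\<integral>\<^sup>+y. ennreal (G 0 y) * indicator E y \<partial>lborel) = (\<integral>\<^sup>+y. ennreal (G 0 y) * indicator {y. 2*\<bar>y\<bar> < m} y \<partial>lborel)"
  shows "emeasure lborel ({y. 2*\<bar>y\<bar> < m} - E) = 0 \<and> emeasure lborel (E - {y. 2*\<bar>y\<bar> < m}) = 0"
proof -
  define B where "B = {y::real. 2*\<bar>y\<bar> < m}"
  have B': "B = {-m/2<..<m/2}" unfolding B_def by (auto simp: abs_less_iff)
  have Bm[measurable]: "B \<in> sets borel" unfolding B' by simp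
  have Bmeas: "emeasure lborel B = ennreal m" unfolding B' Ioo_em by simp
  define c where "c = (pi - m/2)/2"
  have c0: "0 \<le> c" unfolding c_def using m by simp
  define X where "X = E \<inter> B"
  define P where "P = E - B"
  define R where "R = B - E"
  have [measurable]: "X \<in> sets borel" "P \<in> sets borel" "R \<in> sets borel" unfolding X_def P_def R_def by auto
  have eE: "emeasure lborel E = emeasure lborel X + emeasure lborel P"
    unfolding X_def P_def by (subst plus_emeasure) (auto simp: Int_Diff_Un)
  have eB: "emeasure lborel B = emeasure lborel X + emeasure lborel R"
    unfolding X_def R_def by (subst plus_emeasure) (auto intro!: arg_cong[where f="emeasure lborel"])
  have "emeasure lborel X \<le> ennreal m"
    using emeasure_mono[of X E lborel] Em unfolding X_def by auto
  then have Xfin: "emeasure lborel X < \<infinity>" by (rule le_less_trans) simp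
  have PR: "emeasure lborel P = emeasure lborel R"
    using eE eB Em Bmeas Xfin by (auto simp: ennreal_add_left_cancel)
  have split: "(\<integral>\<^sup>+y. ennreal (G 0 y) * indicator (U \<union> V) y \<partial>lborel) =
      (\<integral>\<^sup>+y. ennreal (G 0 y) * indicator U y \<partial>lborel) + (\<integral>\<^sup>+y. ennreal (G 0 y) * indicator V y \<partial>lborel)"
    if [measurable]: "U \<in> sets borel" "V \<in> sets borel" and d: "U \<inter> V = {}" for U V
  proof -
    have "\<And>y. ennreal (G 0 y) * indicator (U \<union> V) y = ennreal (G 0 y) * indicator U y + ennreal (G 0 y) * indicator V y"
      using d by (auto simp: indicator_def)
    then show ?thesis by (simp add: nn_integral_add)
  qed
  have iE: "(\<integral>\<^sup>+y. ennreal (G 0 y) * indicator E y \<partial>lborel) =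
      (\<integral>\<^sup>+y. ennreal (G 0 y) * indicator X y \<partial>lborel) + (\<integral>\<^sup>+y. ennreal (G 0 y) * indicator P y \<partial>lborel)"
  proof -
    have "E = X \<union> P" unfolding X_def P_def by auto
    then show ?thesis using split[of X P] unfolding X_def P_def by auto
  qed
  have iB: "(\<integral>\<^sup>+y. ennreal (G 0 y) * indicator B y \<partial>lborel) =
      (\<integral>\<^sup>+y. ennreal (G 0 y) * indicator X y \<partial>lborel) + (\<integral>\<^sup>+y. ennreal (G 0 y) * indicator R y \<partial>lborel)"
  proof -
    have "B = X \<union> R" unfolding X_def R_def by auto
    then show ?thesis using split[of X R] unfolding X_def R_def by auto
  qed
  have iXfin: "(\<integral>\<^sup>+y. ennreal (G 0 y) * indicator X y \<partial>lborel) < \<infinity>"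
  proof -
    have "(\<integral>\<^sup>+y. ennreal (G 0 y) * indicator X y \<partial>lborel) \<le> (\<integral>\<^sup>+y. ennreal (pi/2) * indicator X y \<partial>lborel)"
      by (rule nn_integral_mono) (auto simp: G0 indicator_def intro!: ennreal_leI)
    also have "\<dots> = ennreal (pi/2) * emeasure lborel X" by (rule nn_integral_cmult_indicator) simp
    also have "\<dots> < \<infinity>" using Xfin by (simp add: ennreal_mult_less_top)
    finally show ?thesis .
  qed
  have iP: "(\<integral>\<^sup>+y. ennreal (G 0 y) * indicator P y \<partial>lborel) \<le> ennreal c * emeasure lborel P"
  proof -
    have "(\<integral>\<^sup>+y. ennreal (G 0 y) * indicator P y \<partial>lborel) \<le> (\<integral>\<^sup>+y. ennreal c * indicator P y \<partial>lborel)"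
    proof (rule nn_integral_mono)
      fix y
      show "ennreal (G 0 y) * indicator P y \<le> ennreal c * indicator P y"
      proof (cases "y \<in> P")
        case True
        then have "m \<le> 2*\<bar>y\<bar>" unfolding P_def B_def by auto
        then have "G 0 y \<le> c" unfolding G0 c_def by simp
        then show ?thesis using True by (simp add: ennreal_leI)
      qed simp
    qed
    also have "\<dots> = ennreal c * emeasure lborel P" by (rule nn_integral_cmult_indicator) simp
    finally show ?thesis .
  qed
  have R0: "emeasure lborel R = 0"
  proof (rule ccontr)
    assume Rn: "emeasure lborel R \<noteq> 0"
    have "emeasure lborel R \<le> ennreal m"
      using emeasure_mono[of R B lborel] Bmeas unfolding R_def by auto
    then have Rfin: "emeasure lborel R < \<infinity>" by (rule le_less_trans) simp
    have "(\<integral>\<^sup>+y. ennreal c * indicator R y \<partial>lborel) < (\<integral>\<^sup>+y. ennreal (G 0 y) * indicator R y \<partial>lborel)"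
    proof (rule nn_integral_less)
      show "(\<integral>\<^sup>+y. ennreal c * indicator R y \<partial>lborel) \<noteq> \<infinity>"
        using Rfin by (simp add: nn_integral_cmult_indicator ennreal_mult_eq_top_iff)
      have gt: "c < G 0 y" if "y \<in> R" for y
        using that unfolding R_def B_def G0 c_def by auto
      show "AE y in lborel. ennreal c * indicator R y \<le> ennreal (G 0 y) * indicator R y"
      proof (rule AE_I2)
        fix y show "ennreal c * indicator R y \<le> ennreal (G 0 y) * indicator R y"
          using gt[of y] by (cases "y \<in> R") (auto intro!: ennreal_leI)
      qed
      show "\<not> (AE y in lborel. ennreal (G 0 y) * indicator R y \<le> ennreal c * indicator R y)"
      proof
        assume "AE y in lborel. ennreal (G 0 y) * indicator R y \<le> ennreal c * indicator R y"
        then have "AE y in lborel. y \<notin> R"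
        proof eventually_elim
          case (elim y)
          show ?case
          proof
            assume "y \<in> R"
            then have "ennreal (G 0 y) \<le> ennreal c" "c < G 0 y" using elim gt by auto
            then show False using c0 by (simp add: ennreal_le_iff2 ennreal_le_iff)
          qed
        qed
        then have "emeasure lborel R = 0"
          by (subst (asm) AE_iff_measurable[of R]) auto
        then show False using Rn by simp
      qed
    qed auto
    then have lt: "ennreal c * emeasure lborel R < (\<integral>\<^sup>+y. ennreal (G 0 y) * indicator R y \<partial>lborel)"
      by (simp add: nn_integral_cmult_indicator)
    have "(\<integral>\<^sup>+y. ennreal (G 0 y) * indicator E y \<partial>lborel) \<le>
        (\<integral>\<^sup>+y. ennreal (G 0 y) * indicator X y \<partial>lborel) + ennreal c * emeasure lborel R"
      unfolding iE PR[symmetric] by (rule add_left_mono[OF iP])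
    also have "\<dots> < (\<integral>\<^sup>+y. ennreal (G 0 y) * indicator B y \<partial>lborel)"
      unfolding iB using lt iXfin by (simp add: ennreal_add_left_cancel_less)
    finally show False using eq unfolding B_def by simp
  qed
  then show ?thesis using PR unfolding R_def P_def B_def by simp
qed

context symctx
begin

lemma spmu: "space \<mu> = UNIV" using sets_eq_imp_space_eq[OF sm] by simp

lemma int_gg0_fin: "(\<integral>\<^sup>+y. gg 0 y \<partial>\<mu>) < \<infinity>"
proof -
  have "(\<integral>\<^sup>+y. gg 0 y \<partial>\<mu>) \<le> ennreal (hh 0) * Phi" by (rule bound_mu) auto
  also have "\<dots> < \<infinity>" using Phi_fin by (simp add: ennreal_mult_less_top)
  finally show ?thesis .
qed

lemma u_mu0_pos: "0 < u \<mu> 0"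
proof -
  have "(\<integral>\<^sup>+y. gg 0 y \<partial>\<mu>) \<noteq> 0"
  proof
    assume "(\<integral>\<^sup>+y. gg 0 y \<partial>\<mu>) = 0"
    then have "AE y in \<mu>. gg 0 y = 0"
      by (subst (asm) nn_integral_0_iff_AE) (auto simp: measurable_cong_sets[OF sm refl])
    then have "AE y in \<mu>. y \<notin> I"
      by eventually_elim (auto simp: gg_def G0 indicator_def split: if_splits)
    then have "emeasure \<mu> I = 0"
      by (subst (asm) AE_iff_measurable[of I]) (auto simp: sm spmu)
    moreover have "emeasure \<mu> UNIV = emeasure \<mu> I + emeasure \<mu> (UNIV - I)"
      by (subst plus_emeasure) (auto simp: sm)
    ultimately show False using nz muI by simp
  qed
  then show ?thesis unfolding u_nn[OF sm muI, of 0, simplified]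
    using int_gg0_fin by (simp add: enn2real_positive_iff zero_less_iff_neq_zero)
qed

lemma Phi_pos: "0 < enn2real Phi"
proof -
  have "u \<mu> 0 \<le> hh 0 * enn2real Phi" by (rule u_mu_le) auto
  then have "0 < pi/2 * enn2real Phi" using u_mu0_pos hh0 by simp
  then show ?thesis by (simp add: zero_less_mult_iff)
qed

lemma x_zero:
  assumes x: "-pi \<le> x" "x \<le> pi" and eqx: "u \<mu> x = u (symmetrization \<mu>) 0"
  shows "x = 0"
proof (rule ccontr)
  assume "x \<noteq> 0"
  then have "hh x * enn2real Phi < pi/2 * enn2real Phi"
    using hh_lt Phi_pos by (intro mult_strict_right_mono) auto
  moreover have "u \<mu> x \<le> hh x * enn2real Phi" by (rule u_mu_le[OF x])
  ultimately show False using eqx u_sym0 by simp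
qed

lemma int_eq:
  assumes eq0: "u \<mu> 0 = u (symmetrization \<mu>) 0"
  shows "(\<integral>\<^sup>+y. ennreal (f y) * gg 0 y \<partial>lborel) = ennreal (pi/2) * Q f"
    and "(\<integral>\<^sup>+y. gg 0 y \<partial>s) = ennreal (pi/2) * M"
proof -
  have "enn2real (\<integral>\<^sup>+y. gg 0 y \<partial>\<mu>) = enn2real (ennreal (pi/2) * Phi)"
    using eq0 unfolding u_nn[OF sm muI, of 0, simplified] u_nn[OF sets_sym symI, of 0, simplified] exact_sym .
  moreover have "ennreal (pi/2) * Phi < \<infinity>" using Phi_fin by (simp add: ennreal_mult_less_top)
  ultimately have e: "(\<integral>\<^sup>+y. gg 0 y \<partial>\<mu>) = ennreal (pi/2) * Phi"
  proof -
    assume a: "enn2real (\<integral>\<^sup>+y. gg 0 y \<partial>\<mu>) = enn2real (ennreal (pi/2) * Phi)" and b: "ennreal (pi/2) * Phi < \<infinity>"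
    have "(\<integral>\<^sup>+y. gg 0 y \<partial>\<mu>) = ennreal (enn2real (\<integral>\<^sup>+y. gg 0 y \<partial>\<mu>))"
      using int_gg0_fin by simp
    also have "\<dots> = ennreal (enn2real (ennreal (pi/2) * Phi))" unfolding a ..
    also have "\<dots> = ennreal (pi/2) * Phi" using b by simp
    finally show ?thesis .
  qed
  have "(\<integral>\<^sup>+y. gg 0 y \<partial>\<mu>) = (\<integral>\<^sup>+y. ennreal (f y) * gg 0 y \<partial>lborel) + (\<integral>\<^sup>+y. gg 0 y \<partial>s)"
    by (rule decomp.int_split[OF dmu]) simp
  then have sum: "(\<integral>\<^sup>+y. ennreal (f y) * gg 0 y \<partial>lborel) + (\<integral>\<^sup>+y. gg 0 y \<partial>s) = ennreal (pi/2) * Q f + ennreal (pi/2) * M"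
    using e unfolding Phi_def by (simp add: distrib_left)
  have b1: "(\<integral>\<^sup>+y. ennreal (f y) * gg 0 y \<partial>lborel) \<le> ennreal (pi/2) * Q f"
    using dens_bound[OF f_meas, of 0] hh0 by simp
  have b2: "(\<integral>\<^sup>+y. gg 0 y \<partial>s) \<le> ennreal (pi/2) * M"
    using decomp.sing_bound[OF dmu, of 0] hh0 unfolding M_def by simp
  have fin: "ennreal (pi/2) * Q f + ennreal (pi/2) * M < \<infinity>"
    using Phi_fin unfolding Phi_def by (simp add: distrib_left[symmetric] ennreal_mult_less_top)
  from ennreal_split_eq[OF b1 b2 sum fin]
  show "(\<integral>\<^sup>+y. ennreal (f y) * gg 0 y \<partial>lborel) = ennreal (pi/2) * Q f"
    and "(\<integral>\<^sup>+y. gg 0 y \<partial>s) = ennreal (pi/2) * M" by auto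
qed

end

context symctx
begin

lemma sing_point:
  assumes Bq: "(\<integral>\<^sup>+y. gg 0 y \<partial>s) = ennreal (pi/2) * M"
    and A: "A \<in> sets borel"
  shows "emeasure s A = M * indicator A 0"
proof -
  have sps: "space s = UNIV" using sets_eq_imp_space_eq[OF ss] by simp
  have ms: "g \<in> borel_measurable s" if "g \<in> borel_measurable borel" for g :: "real \<Rightarrow> ennreal"
    using that by (simp add: measurable_cong_sets[OF ss refl])
  define R where "R = (\<integral>\<^sup>+y. ennreal (\<bar>y\<bar>/2) * indicator I y \<partial>s)"
  have pw: "gg 0 y + ennreal (\<bar>y\<bar>/2) * indicator I y = ennreal (pi/2) * indicator I y" for y
  proof (cases "y \<in> I")
    case True
    then have "0 \<le> (pi - \<bar>y\<bar>)/2" by auto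
    then have "ennreal ((pi - \<bar>y\<bar>)/2) + ennreal (\<bar>y\<bar>/2) = ennreal ((pi - \<bar>y\<bar>)/2 + \<bar>y\<bar>/2)"
      by (subst ennreal_plus) auto
    then show ?thesis using True by (simp add: gg_def G0 add_divide_distrib[symmetric])
  qed (simp add: gg_def)
  have "(\<integral>\<^sup>+y. gg 0 y \<partial>s) + R = (\<integral>\<^sup>+y. ennreal (pi/2) * indicator I y \<partial>s)"
    unfolding R_def pw[symmetric] by (rule nn_integral_add[symmetric]) (auto intro!: ms)
  also have "\<dots> = ennreal (pi/2) * M" unfolding M_def by (rule nn_integral_cmult_indicator) (simp add: ss)
  finally have "ennreal (pi/2) * M + R = ennreal (pi/2) * M + 0" unfolding Bq by simp
  moreover have "ennreal (pi/2) * M \<noteq> \<infinity>" using M_fin by (simp add: ennreal_mult_eq_top_iff)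
  ultimately have "R = 0" by (simp add: ennreal_add_left_cancel)
  then have "AE y in s. ennreal (\<bar>y\<bar>/2) * indicator I y = 0"
    unfolding R_def by (subst (asm) nn_integral_0_iff_AE) (auto intro!: ms)
  moreover have "AE y in s. y \<in> I" by (rule AE_I[OF ss sI])
  ultimately have "AE y in s. y = 0" by eventually_elim (auto simp: indicator_def)
  then have s0: "emeasure s (UNIV - {0}) = 0"
    by (subst (asm) AE_iff_measurable[of "UNIV - {0}"]) (auto simp: ss sps)
  have sub0: "emeasure s (B - {0}) = 0" for B
    using emeasure_mono[of "B - {0}" "UNIV - {0}" s] s0 ss by auto
  have split: "emeasure s B = emeasure s (B \<inter> {0}) + emeasure s (B - {0})" if "B \<in> sets borel" for B
  proof -
    have "B \<inter> {0} \<union> (B - {0}) = B" by auto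
    then show ?thesis by (subst plus_emeasure) (use that ss in auto)
  qed
  have "M = emeasure s {0}" unfolding M_def using split[of I] sub0[of I] by simp
  then show ?thesis using split[OF A] sub0[of A] by (cases "0 \<in> A") auto
qed

end

context symctx
begin

definition "aa t = (\<integral>\<^sup>+y. ennreal (G 0 y) * indicator {y \<in> I. t < f y} y \<partial>lborel)"
definition "bb t = ennreal (pi/2) * K (mf f t)"

lemma aa_meas[measurable]: "aa \<in> borel_measurable borel"
  unfolding aa_def by measurable

lemma levels_ae:
  assumes Aeq: "(\<integral>\<^sup>+y. ennreal (f y) * gg 0 y \<partial>lborel) = ennreal (pi/2) * Q f"
  shows "AE t in lborel. 0 \<le> t \<longrightarrow> aa t = bb t"
proof -
  have L: "(\<integral>\<^sup>+y. ennreal (f y) * gg 0 y \<partial>lborel) = (\<integral>\<^sup>+t. indicator {0..} t * aa t \<partial>lborel)"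
    unfolding aa_def by (rule dens_layer[OF f_meas])
  have R: "ennreal (pi/2) * Q f = (\<integral>\<^sup>+t. indicator {0..} t * bb t \<partial>lborel)"
    unfolding Q_def bb_def by (subst nn_integral_cmult[symmetric]) (auto simp: mult_ac)
  have le: "aa t \<le> bb t" for t
    unfolding aa_def bb_def using bound_E[of 0 "{y \<in> I. t < f y}" "mf f t"] hh0 by (simp add: em_mf em_mf')
  have "Q f \<le> Phi" unfolding Phi_def by simp
  then have "ennreal (pi/2) * Q f < \<infinity>" using Phi_fin by (simp add: ennreal_mult_less_top le_less_trans)
  have "AE t in lborel. indicator {0..} t * bb t \<le> indicator {0..} t * aa t"
  proof (rule ccontr)
    assume na: "\<not> (AE t in lborel. indicator {0..} t * bb t \<le> indicator {0..} t * aa t)"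
    have "(\<integral>\<^sup>+t. indicator {0..} t * aa t \<partial>lborel) < (\<integral>\<^sup>+t. indicator {0..} t * bb t \<partial>lborel)"
    proof (rule nn_integral_less)
      show "(\<integral>\<^sup>+t. indicator {0..} t * aa t \<partial>lborel) \<noteq> \<infinity>"
        using \<open>ennreal (pi/2) * Q f < \<infinity>\<close> L Aeq by simp
      show "AE t in lborel. indicator {0..} t * aa t \<le> indicator {0..} t * bb t"
        using le by (auto intro!: mult_left_mono)
      show "\<not> (AE t in lborel. indicator {0..} t * bb t \<le> indicator {0..} t * aa t)" by (rule na)
      show "(\<lambda>t. indicator {0..} t * bb t) \<in> borel_measurable lborel" unfolding bb_def by measurable
    qed simp
    then show False using L R Aeq by simp
  qed
  then show ?thesis
  proof eventually_elim
    case (elim t)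
    show ?case using elim le[of t] by (auto intro: antisym)
  qed
qed

lemma sym_diffs:
  assumes t: "0 \<le> t" and ab: "aa t = bb t"
  shows "emeasure lborel ({y. 2*\<bar>y\<bar> < mf f t} - {y \<in> I. t < f y}) = 0 \<and>
         emeasure lborel ({y \<in> I. t < f y} - {y. 2*\<bar>y\<bar> < mf f t}) = 0"
proof (rule bathtub_strict)
  show "emeasure lborel {y \<in> I. t < f y} = ennreal (mf f t)" by (rule em_mf)
  show "(\<integral>\<^sup>+y. ennreal (G 0 y) * indicator {y \<in> I. t < f y} y \<partial>lborel) =
    (\<integral>\<^sup>+y. ennreal (G 0 y) * indicator {y. 2*\<bar>y\<bar> < mf f t} y \<partial>lborel)"
    using ab unfolding aa_def bb_def exact_B[OF mf_nonneg] .
qed (auto simp: mf_nonneg mf_le)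

lemma null_union0:
  fixes A D :: "real set"
  assumes "A \<subseteq> D \<union> {0}" "D \<in> sets borel" "emeasure lborel D = 0"
  shows "emeasure lborel A = 0"
proof -
  have "emeasure lborel A \<le> emeasure lborel (D \<union> {0})" by (rule emeasure_mono) (use assms in auto)
  also have "\<dots> \<le> emeasure lborel D + emeasure lborel {0::real}" by (rule emeasure_subadditive) (use assms in auto)
  also have "\<dots> = 0" using assms by simp
  finally show ?thesis by simp
qed

lemma f_eq_fs:
  assumes Aeq: "(\<integral>\<^sup>+y. ennreal (f y) * gg 0 y \<partial>lborel) = ennreal (pi/2) * Q f"
  shows "AE y in lborel. y \<in> I \<longrightarrow> f y = fs f y"
proof -
  have fsnn: "\<And>y. 0 \<le> fs f y" by (rule fs_nonneg[OF f_meas f_nn])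
  have "AE y in lborel. y \<in> I \<longrightarrow> f y \<le> fs f y"
  proof (rule ae_le_from_levels)
    show "AE t in lborel. emeasure lborel ({y \<in> I. t < f y} - {y. t < fs f y}) = 0"
      using levels_ae[OF Aeq]
    proof eventually_elim
      case (elim t)
      show ?case
      proof (cases "0 \<le> t")
        case True
        have sub: "{y \<in> I. t < f y} - {y. t < fs f y} \<subseteq> ({y \<in> I. t < f y} - {y. 2*\<bar>y\<bar> < mf f t}) \<union> {0}"
          using fs_char[OF f_meas f_nn] by auto
        have ms: "{y \<in> I. t < f y} - {y. 2*\<bar>y\<bar> < mf f t} \<in> sets borel" by measurable
        have "aa t = bb t" using elim True by simp
        then have z: "emeasure lborel ({y \<in> I. t < f y} - {y. 2*\<bar>y\<bar> < mf f t}) = 0"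
          by (rule conjunct2[OF sym_diffs[OF True]])
        show ?thesis by (rule null_union0[OF sub ms z])
      next
        case False
        then have "\<forall>y. t < fs f y" using fsnn by (meson less_le_trans not_le)
        then have "{y \<in> I. t < f y} - {y. t < fs f y} = {}" by auto
        then show ?thesis by (simp only: emeasure_empty)
      qed
    qed
  qed auto
  moreover have "AE y in lborel. y \<in> I \<longrightarrow> fs f y \<le> f y"
  proof (rule ae_le_from_levels)
    show "AE t in lborel. emeasure lborel ({y \<in> I. t < fs f y} - {y. t < f y}) = 0"
      using levels_ae[OF Aeq]
    proof eventually_elim
      case (elim t)
      show ?case
      proof (cases "0 \<le> t")
        case True
        have sub: "{y \<in> I. t < fs f y} - {y. t < f y} \<subseteq> ({y. 2*\<bar>y\<bar> < mf f t} - {y \<in> I. t < f y}) \<union> {0}"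
          using fs_char[OF f_meas f_nn] by auto
        have ms: "{y. 2*\<bar>y\<bar> < mf f t} - {y \<in> I. t < f y} \<in> sets borel" by measurable
        have "aa t = bb t" using elim True by simp
        then have z: "emeasure lborel ({y. 2*\<bar>y\<bar> < mf f t} - {y \<in> I. t < f y}) = 0"
          by (rule conjunct1[OF sym_diffs[OF True]])
        show ?thesis by (rule null_union0[OF sub ms z])
      next
        case False
        then have "\<forall>y. t < f y" using f_nn by (meson less_le_trans not_le)
        then have "{y \<in> I. t < fs f y} - {y. t < f y} = {}" by auto
        then show ?thesis by (simp only: emeasure_empty)
      qed
    qed
  qed auto
  ultimately show ?thesis by eventually_elim auto
qed

end

context symctx
begin

lemma f_out: "AE x in lborel. x \<notin> I \<longrightarrow> f x = 0"
proof -
  have "(\<integral>\<^sup>+x. ennreal (f x) * indicator (UNIV - I) x \<partial>lborel) \<le> emeasure \<mu> (UNIV - I)"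
    using eqmu[of "UNIV - I"] by simp
  then have "(\<integral>\<^sup>+x. ennreal (f x) * indicator (UNIV - I) x \<partial>lborel) = 0" using muI by simp
  then have "AE x in lborel. ennreal (f x) * indicator (UNIV - I) x = 0"
    by (subst (asm) nn_integral_0_iff_AE) auto
  then show ?thesis
  proof eventually_elim
    case (elim x)
    then show ?case using f_nn[of x] by (auto simp: indicator_def ennreal_eq_0_iff)
  qed
qed

lemma mu_eq_sym:
  assumes Aeq: "(\<integral>\<^sup>+y. ennreal (f y) * gg 0 y \<partial>lborel) = ennreal (pi/2) * Q f"
    and Bq: "(\<integral>\<^sup>+y. gg 0 y \<partial>s) = ennreal (pi/2) * M"
  shows "\<mu> = symmetrization \<mu>"
proof (rule measure_eqI)
  show "sets \<mu> = sets (symmetrization \<mu>)" using sm sets_sym by simp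
  fix A assume "A \<in> sets \<mu>"
  then have A: "A \<in> sets borel" using sm by simp
  have "(\<integral>\<^sup>+x. ennreal (f x) * indicator A x \<partial>lborel) = (\<integral>\<^sup>+x. ennreal (fs f x) * indicator A x \<partial>lborel)"
  proof (rule nn_integral_cong_AE)
    show "AE x in lborel. ennreal (f x) * indicator A x = ennreal (fs f x) * indicator A x"
      using f_eq_fs[OF Aeq] f_out
    proof eventually_elim
      case (elim x)
      then show ?case by (cases "x \<in> I") (auto simp: fs_out)
    qed
  qed
  then show "emeasure \<mu> A = emeasure (symmetrization \<mu>) A"
    unfolding eqmu[OF A] emeasure_sym[OF A] sing_point[OF Bq A] emeasure_pm[OF A] by simp
qed

lemma eq_case:
  assumes x: "-pi \<le> x" "x \<le> pi" and eqx: "u \<mu> x = u (symmetrization \<mu>) 0"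
  shows "\<mu> = symmetrization \<mu>"
proof -
  have "x = 0" by (rule x_zero[OF x eqx])
  then have eq0: "u \<mu> 0 = u (symmetrization \<mu>) 0" using eqx by simp
  show ?thesis by (rule mu_eq_sym[OF int_eq(1)[OF eq0] int_eq(2)[OF eq0]])
qed

end

theorem theorem3p11:
  fixes \<mu> :: "real measure"
  assumes "finite_borel_measure_on_interval \<mu>"
  shows "u (symmetrization \<mu>) 0 = (SUP x\<in>{-pi..pi}. u (symmetrization \<mu>) x)
    \<and> (\<forall>x\<in>{-pi..pi}. u (symmetrization \<mu>) x \<le> u (symmetrization \<mu>) 0)
    \<and> (\<exists>x\<in>{-pi..pi}. u \<mu> x = (SUP y\<in>{-pi..pi}. u \<mu> y))
    \<and> (SUP x\<in>{-pi..pi}. u \<mu> x) \<le> u (symmetrization \<mu>) 0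
    \<and> ((SUP x\<in>{-pi..pi}. u \<mu> x) = u (symmetrization \<mu>) 0 \<longleftrightarrow> \<mu> = symmetrization \<mu>)"
proof -
  interpret symctx \<mu> by unfold_locales (rule assms)
  have z: "(0::real) \<in> {-pi..pi}" using pi_gt_zero by simp
  have P2: "\<forall>x\<in>{-pi..pi}. u (symmetrization \<mu>) x \<le> u (symmetrization \<mu>) 0"
  proof
    fix x :: real assume "x \<in> {-pi..pi}"
    then have x: "-pi \<le> x" "x \<le> pi" by auto
    show "u (symmetrization \<mu>) x \<le> u (symmetrization \<mu>) 0"
      using u_sym_le[OF x] u_le_sym0[OF x] by (rule order_trans)
  qed
  have P1: "u (symmetrization \<mu>) 0 = (SUP x\<in>{-pi..pi}. u (symmetrization \<mu>) x)"
    by (rule cSup_eq_maximum[symmetric]) (use z P2 in auto)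
  obtain xm where xm: "xm \<in> {-pi..pi}" "\<forall>y\<in>{-pi..pi}. u \<mu> y \<le> u \<mu> xm"
    using u_max[OF sm finmu muI] by blast
  have supm: "(SUP y\<in>{-pi..pi}. u \<mu> y) = u \<mu> xm"
    by (rule cSup_eq_maximum) (use xm in auto)
  have P3: "\<exists>x\<in>{-pi..pi}. u \<mu> x = (SUP y\<in>{-pi..pi}. u \<mu> y)" using xm supm by auto
  have P4: "(SUP x\<in>{-pi..pi}. u \<mu> x) \<le> u (symmetrization \<mu>) 0"
    unfolding supm using u_mu_le[of xm] u_le_sym0[of xm] xm(1) by auto
  have P5: "(SUP x\<in>{-pi..pi}. u \<mu> x) = u (symmetrization \<mu>) 0 \<longleftrightarrow> \<mu> = symmetrization \<mu>"
  proof
    assume "(SUP x\<in>{-pi..pi}. u \<mu> x) = u (symmetrization \<mu>) 0"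
    then show "\<mu> = symmetrization \<mu>" unfolding supm using eq_case xm(1) by auto
  next
    assume e: "\<mu> = symmetrization \<mu>"
    show "(SUP x\<in>{-pi..pi}. u \<mu> x) = u (symmetrization \<mu>) 0"
    proof -
      have "u \<mu> = u (symmetrization \<mu>)" using e by (rule arg_cong)
      then show ?thesis using P1 by simp
    qed
  qed
  show ?thesis using P1 P2 P3 P4 P5 by blast
qed

end
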